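(* Let $\mathbf R=\{R_i,t_i\}_{i\ge0}$ be a preperfectoid tower arising from a pair $(R,I_0)$, with $0$-th small tilt $R^{s.\flat}$ and ideal $I_0^{s.\flat}\subset R^{s.\flat}$. Then for every $i\ge0$ the ring homomorphism $R^{s.\flat}/(I_0^{s.\flat})^{p^i}\to R^{s.\flat}/(I_0^{s.\flat})^{p^{i+1}}$, $x\mapsto x^p$, induced by the absolute Frobenius of $R^{s.\flat}$, is injective.
   Context: Fix a prime $p$; rings are commutative with $1$. For a ring $A$, an ideal $I$ and an $A$-module $M$, $M_{I\text{-tor}}$ is the submodule of $x\in M$ such that for every $a\in I$ some $a^nx=0$; $\varphi_{I,A}\colon A_{I\text{-tor}}\to A/IA$ is inclusion followed by projection. $\varphi$ is absolute Frobenius. A tower of rings $\mathbf R=\{R_i,t_i\}_{i\ge0}$ is a sequence of ring maps $R_0\xrightarrow{t_0}R_1\to\cdots$. For a ring $R$ and ideal $I_0$, write $\overline{R_i}=R_i/I_0R_i$, $\overline{t_i}$ the induced maps. A purely inseparable tower arising from $(R,I_0)$: (a) $R_0=R$, $p\in I_0$; (b) each $\overline{t_i}$ injective; (c) $\varphi(\overline{R_{i+1}})\subset\overline{t_i}(\overline{R_i})$; then $F_i\colon\overline{R_{i+1}}\to\overline{R_i}$ is the unique ring map with $\overline{t_i}\circ F_i=\varphi$. A preperfectoid tower is a purely inseparable tower with: (d) each $F_i$ surjective; (f) $I_0$ principal and a principal ideal $I_1\subset R_1$ with $I_1^p=I_0R_1$ and $\ker F_i=I_1\overline{R_{i+1}}$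 for all $i$; (g) for all $i$, $I_0(R_i)_{I_0\text{-tor}}=0$ and a bijection $(F_i)_{\mathrm{tor}}\colon(R_{i+1})_{I_0\text{-tor}}\to(R_i)_{I_0\text{-tor}}$ with $\varphi_{I_0,R_i}\circ(F_i)_{\mathrm{tor}}=F_i\circ\varphi_{I_0,R_{i+1}}$. Small tilt: $R^{s.\flat}:=\varprojlim(\cdots\xrightarrow{F_1}\overline{R_1}\xrightarrow{F_0}\overline{R_0})$ and $I_0^{s.\flat}$ is the kernel of the projection $R^{s.\flat}\to R/I_0$. *)

theory Defs
  imports "HOL-Algebra.Algebra" "HOL-Algebra.Ideal_Product"
begin

text \<open>Towers of commutative rings are modelled as sequences of HOL-Algebra rings
  R :: nat => 'a ring over a common carrier type, with transition maps t i : R i -> R (i+1).\<close>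

primrec tower_map :: "(nat \<Rightarrow> 'a \<Rightarrow> 'a) \<Rightarrow> nat \<Rightarrow> nat \<Rightarrow> 'a \<Rightarrow> 'a" where
  "tower_map t m 0 = (\<lambda>x. x)"
| "tower_map t m (Suc k) = t (m + k) \<circ> tower_map t m k"

definition ext_ideal :: "(nat \<Rightarrow> 'a ring) \<Rightarrow> (nat \<Rightarrow> 'a \<Rightarrow> 'a) \<Rightarrow> 'a set \<Rightarrow> nat \<Rightarrow> 'a set" where
  "ext_ideal R t I0 i = Idl\<^bsub>R i\<^esub> (tower_map t 0 i ` I0)"

definition Rbar :: "(nat \<Rightarrow> 'a ring) \<Rightarrow> (nat \<Rightarrow> 'a \<Rightarrow> 'a) \<Rightarrow> 'a set \<Rightarrow> nat \<Rightarrow> 'a set ring" where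
  "Rbar R t I0 i = R i Quot ext_ideal R t I0 i"

definition tbar :: "(nat \<Rightarrow> 'a ring) \<Rightarrow> (nat \<Rightarrow> 'a \<Rightarrow> 'a) \<Rightarrow> 'a set \<Rightarrow> nat \<Rightarrow> 'a set \<Rightarrow> 'a set" where
  "tbar R t I0 i Y = ext_ideal R t I0 (Suc i) <+>\<^bsub>R (Suc i)\<^esub> (t i ` Y)"

definition torsion :: "'a ring \<Rightarrow> 'a set \<Rightarrow> 'a set" where
  "torsion A I = {x \<in> carrier A. \<forall>a\<in>I. \<exists>n::nat. a [^]\<^bsub>A\<^esub> n \<otimes>\<^bsub>A\<^esub> x = \<zero>\<^bsub>A\<^esub>}"

definition phi_tor :: "'a ring \<Rightarrow> 'a set \<Rightarrow> 'a \<Rightarrow> 'a set" where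
  "phi_tor A I x = I +>\<^bsub>A\<^esub> x"

definition purely_inseparable_tower ::
  "nat \<Rightarrow> (nat \<Rightarrow> 'a ring) \<Rightarrow> (nat \<Rightarrow> 'a \<Rightarrow> 'a) \<Rightarrow> 'a set \<Rightarrow> bool" where
  "purely_inseparable_tower p R t I0 \<longleftrightarrow>
     (\<forall>i. cring (R i)) \<and> (\<forall>i. t i \<in> ring_hom (R i) (R (Suc i))) \<and>
     ideal I0 (R 0) \<and> add_pow (R 0) p \<one>\<^bsub>R 0\<^esub> \<in> I0 \<and>
     (\<forall>i. inj_on (tbar R t I0 i) (carrier (Rbar R t I0 i))) \<and>
     (\<forall>i. \<forall>Y\<in>carrier (Rbar R t I0 (Suc i)).
          Y [^]\<^bsub>Rbar R t I0 (Suc i)\<^esub> p \<in> tbar R t I0 i ` carrier (Rbar R t I0 i))"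

definition Frob_F :: "nat \<Rightarrow> (nat \<Rightarrow> 'a ring) \<Rightarrow> (nat \<Rightarrow> 'a \<Rightarrow> 'a) \<Rightarrow> 'a set \<Rightarrow> nat \<Rightarrow> 'a set \<Rightarrow> 'a set" where
  "Frob_F p R t I0 i Z = (THE Y. Y \<in> carrier (Rbar R t I0 i) \<and>
      tbar R t I0 i Y = pow (Rbar R t I0 (Suc i)) Z p)"

definition preperfectoid_tower ::
  "nat \<Rightarrow> (nat \<Rightarrow> 'a ring) \<Rightarrow> (nat \<Rightarrow> 'a \<Rightarrow> 'a) \<Rightarrow> 'a set \<Rightarrow> bool" where
  "preperfectoid_tower p R t I0 \<longleftrightarrow>
     purely_inseparable_tower p R t I0 \<and>
     \<comment> \<open>(d) each F_i surjective\<close>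
     (\<forall>i. Frob_F p R t I0 i ` carrier (Rbar R t I0 (Suc i)) = carrier (Rbar R t I0 i)) \<and>
     \<comment> \<open>(f)\<close>
     (\<exists>a\<in>carrier (R 0). I0 = PIdl\<^bsub>R 0\<^esub> a) \<and>
     (\<exists>I1. (\<exists>b\<in>carrier (R 1). I1 = PIdl\<^bsub>R 1\<^esub> b) \<and>
           I1 [^]\<^bsub>ideals_set (R 1)\<^esub> p = ext_ideal R t I0 1 \<and>
           (\<forall>i. {Z \<in> carrier (Rbar R t I0 (Suc i)). Frob_F p R t I0 i Z = \<zero>\<^bsub>Rbar R t I0 i\<^esub>}
                = (\<lambda>x. ext_ideal R t I0 (Suc i) +>\<^bsub>R (Suc i)\<^esub> x) `
                    (Idl\<^bsub>R (Suc i)\<^esub> (tower_map t 1 i ` I1)))) \<and>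
     \<comment> \<open>(g)\<close>
     (\<forall>i. \<forall>a\<in>ext_ideal R t I0 i. \<forall>x\<in>torsion (R i) (ext_ideal R t I0 i).
          a \<otimes>\<^bsub>R i\<^esub> x = \<zero>\<^bsub>R i\<^esub>) \<and>
     (\<forall>i. \<exists>g. bij_betw g (torsion (R (Suc i)) (ext_ideal R t I0 (Suc i)))
                         (torsion (R i) (ext_ideal R t I0 i)) \<and>
             (\<forall>x\<in>torsion (R (Suc i)) (ext_ideal R t I0 (Suc i)).
                phi_tor (R i) (ext_ideal R t I0 i) (g x) =
                Frob_F p R t I0 i (phi_tor (R (Suc i)) (ext_ideal R t I0 (Suc i)) x)))"

definition small_tilt :: "nat \<Rightarrow> (nat \<Rightarrow> 'a ring) \<Rightarrow> (nat \<Rightarrow> 'a \<Rightarrow> 'a) \<Rightarrow> 'a set \<Rightarrow> (nat \<Rightarrow> 'a set) ring" where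
  "small_tilt p R t I0 =
     \<lparr> carrier = {f. \<forall>i. f i \<in> carrier (Rbar R t I0 i) \<and> Frob_F p R t I0 i (f (Suc i)) = f i},
       monoid.mult = (\<lambda>f g i. f i \<otimes>\<^bsub>Rbar R t I0 i\<^esub> g i),
       one = (\<lambda>i. \<one>\<^bsub>Rbar R t I0 i\<^esub>),
       ring.zero = (\<lambda>i. \<zero>\<^bsub>Rbar R t I0 i\<^esub>),
       ring.add = (\<lambda>f g i. f i \<oplus>\<^bsub>Rbar R t I0 i\<^esub> g i) \<rparr>"

definition small_tilt_ideal :: "nat \<Rightarrow> (nat \<Rightarrow> 'a ring) \<Rightarrow> (nat \<Rightarrow> 'a \<Rightarrow> 'a) \<Rightarrow> 'a set \<Rightarrow> (nat \<Rightarrow> 'a set) set" where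
  "small_tilt_ideal p R t I0 =
     {f \<in> carrier (small_tilt p R t I0). f 0 = \<zero>\<^bsub>Rbar R t I0 0\<^esub>}"

definition frob_quot :: "('b, 'c) ring_scheme \<Rightarrow> nat \<Rightarrow> 'b set \<Rightarrow> 'b set \<Rightarrow> 'b set" where
  "frob_quot S p J' Z = the_elem ((\<lambda>x. J' +>\<^bsub>S\<^esub> (x [^]\<^bsub>S\<^esub> p)) ` Z)"

end

theory Submission
  imports Defs
begin


lemma (in cring) binom_ring:
  assumes a: "a \<in> carrier R" and b: "b \<in> carrier R"
  shows "(a \<oplus> b) [^] (n::nat) = (\<Oplus>k\<in>{..n}. add_pow R (n choose k) (a [^] k \<otimes> b [^] (n - k)))"
proof (induction n)
  case 0
  then show ?case using a b by simp
next
  case (Suc n)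
  define f where "f = (\<lambda>m k. add_pow R (m choose k) (a [^] k \<otimes> b [^] (m - k)))"
  have fc: "\<And>m k. f m k \<in> carrier R" unfolding f_def using a b by simp
  have IH: "(a \<oplus> b) [^] n = (\<Oplus>k\<in>{..n}. f n k)" using Suc unfolding f_def by simp
  have L1: "(\<Oplus>k\<in>{..n}. f n k) \<otimes> a = (\<Oplus>k\<in>{..n}. add_pow R (n choose k) (a [^] Suc k \<otimes> b [^] (n - k)))"
  proof -
    have "(\<Oplus>k\<in>{..n}. f n k) \<otimes> a = (\<Oplus>k\<in>{..n}. f n k \<otimes> a)"
      using finsum_ldistr[of "{..n}" a "f n"] fc a by auto
    also have "\<dots> = (\<Oplus>k\<in>{..n}. add_pow R (n choose k) (a [^] Suc k \<otimes> b [^] (n - k)))"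
      apply (rule finsum_cong') using a b fc
      by (auto simp: f_def add_pow_ldistr add_pow_rdistr m_assoc m_comm m_lcomm)
    finally show ?thesis .
  qed
  have L2: "(\<Oplus>k\<in>{..n}. f n k) \<otimes> b = (\<Oplus>k\<in>{..Suc n}. add_pow R (n choose k) (a [^] k \<otimes> b [^] (Suc n - k)))"
  proof -
    have "(\<Oplus>k\<in>{..n}. f n k) \<otimes> b = (\<Oplus>k\<in>{..n}. f n k \<otimes> b)"
      using finsum_ldistr[of "{..n}" b "f n"] fc b by auto
    also have "\<dots> = (\<Oplus>k\<in>{..n}. add_pow R (n choose k) (a [^] k \<otimes> b [^] (Suc n - k)))"
      apply (rule finsum_cong') using a b fc
      by (auto simp: f_def add_pow_ldistr m_assoc Suc_diff_le)
    also have "\<dots> = (\<Oplus>k\<in>{..Suc n}. add_pow R (n choose k) (a [^] k \<otimes> b [^] (Suc n - k)))"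
      using a b by (simp add: finsum_Suc binomial_eq_0)
    finally show ?thesis .
  qed
  have "(a \<oplus> b) [^] Suc n = (\<Oplus>k\<in>{..n}. f n k) \<otimes> a \<oplus> (\<Oplus>k\<in>{..n}. f n k) \<otimes> b"
    using IH a b fc by (simp add: r_distr)
  also have "\<dots> = (\<Oplus>k\<in>{..n}. add_pow R (n choose k) (a [^] Suc k \<otimes> b [^] (n - k)))
      \<oplus> ((\<Oplus>k\<in>{..n}. add_pow R (n choose Suc k) (a [^] Suc k \<otimes> b [^] (n - k))) \<oplus> b [^] Suc n)"
  proof -
    have "(\<Oplus>k\<in>{..Suc n}. add_pow R (n choose k) (a [^] k \<otimes> b [^] (Suc n - k)))
       = (\<Oplus>k\<in>{..n}. add_pow R (n choose Suc k) (a [^] Suc k \<otimes> b [^] (Suc n - Suc k)))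
         \<oplus> add_pow R (n choose 0) (a [^] (0::nat) \<otimes> b [^] (Suc n - 0))"
      by (rule finsum_Suc2) (use a b in auto)
    then show ?thesis unfolding L1 L2 using a b by simp
  qed
  also have "\<dots> = (\<Oplus>k\<in>{..n}. add_pow R (n choose k) (a [^] Suc k \<otimes> b [^] (n - k)) \<oplus> add_pow R (n choose Suc k) (a [^] Suc k \<otimes> b [^] (n - k))) \<oplus> b [^] Suc n"
    using a b by (simp add: finsum_addf a_assoc)
  also have "\<dots> = (\<Oplus>k\<in>{..n}. add_pow R (Suc n choose Suc k) (a [^] Suc k \<otimes> b [^] (Suc n - Suc k))) \<oplus> b [^] Suc n"
    apply (rule arg_cong[where f="\<lambda>x. x \<oplus> _"])
    apply (rule finsum_cong') using a b by (auto simp: add.nat_pow_mult)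
  also have "\<dots> = (\<Oplus>k\<in>{..Suc n}. add_pow R (Suc n choose k) (a [^] k \<otimes> b [^] (Suc n - k)))"
  proof -
    have "(\<Oplus>k\<in>{..Suc n}. add_pow R (Suc n choose k) (a [^] k \<otimes> b [^] (Suc n - k)))
       = (\<Oplus>k\<in>{..n}. add_pow R (Suc n choose Suc k) (a [^] Suc k \<otimes> b [^] (Suc n - Suc k)))
         \<oplus> add_pow R (Suc n choose 0) (a [^] (0::nat) \<otimes> b [^] (Suc n - 0))"
      by (rule finsum_Suc2) (use a b in auto)
    then show ?thesis using a b by (simp del: finsum_Suc)
  qed
  finally show ?case .
qed

lemma (in cring) add_pow_char_zero:
  assumes "add_pow R p \<one> = \<zero>" "p dvd c" "x \<in> carrier R"
  shows "add_pow R (c::nat) x = \<zero>"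
proof -
  obtain d where c: "c = p * d" using assms(2) by blast
  have "add_pow R p x = add_pow R p \<one> \<otimes> x" using assms(3) by (simp add: add_pow_ldistr)
  also have "\<dots> = \<zero>" using assms by simp
  finally have px: "add_pow R p x = \<zero>" .
  have "add_pow R c x = add_pow R d (add_pow R p x)"
    unfolding c using assms(3) by (simp add: add.nat_pow_pow)
  then show ?thesis using px by simp
qed

lemma (in cring) freshman:
  assumes p: "Factorial_Ring.prime (p::nat)" and ch: "add_pow R p \<one> = \<zero>"
    and a: "a \<in> carrier R" and b: "b \<in> carrier R"
  shows "(a \<oplus> b) [^] p = a [^] p \<oplus> b [^] p"
proof -
  obtain m where m: "p = Suc (Suc m)"
    using prime_ge_2_nat[OF p] by (metis add_2_eq_Suc le_iff_add)
  define f where "f = (\<lambda>k. add_pow R (p choose k) (a [^] k \<otimes> b [^] (p - k)))"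
  have fc: "\<And>k. f k \<in> carrier R" unfolding f_def using a b by simp
  have "(a \<oplus> b) [^] p = (\<Oplus>k\<in>{..Suc (Suc m)}. f k)"
    unfolding f_def using binom_ring[OF a b, of p] m by simp
  also have "\<dots> = f (Suc (Suc m)) \<oplus> (\<Oplus>k\<in>{..Suc m}. f k)"
    by (rule finsum_Suc) (use fc in auto)
  also have "(\<Oplus>k\<in>{..Suc m}. f k) = (\<Oplus>k\<in>{..m}. f (Suc k)) \<oplus> f 0"
    by (rule finsum_Suc2) (use fc in auto)
  also have "(\<Oplus>k\<in>{..m}. f (Suc k)) = (\<Oplus>k\<in>{..m}. \<zero>)"
  proof (rule finsum_cong')
    fix k assume k: "k \<in> {..m}"
    have "p dvd (p choose Suc k)"
      by (rule dvd_choose_prime) (use k m p in auto)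
    then show "f (Suc k) = \<zero>" unfolding f_def
      by (rule add_pow_char_zero[OF ch]) (use a b in simp)
  qed auto
  finally show ?thesis using a b fc m unfolding f_def by (simp add: a_comm)
qed


lemma hom_add_pow:
  assumes h: "h \<in> ring_hom A B" and "ring A" "ring B" and x: "x \<in> carrier A"
  shows "h (add_pow A (n::nat) x) = add_pow B n (h x)"
proof -
  interpret hr: ring_hom_ring A B h using ring_hom_ringI2[OF assms(2,3) h] .
  show ?thesis
  proof (induction n)
    case 0
    then show ?case by simp
  next
    case (Suc n)
    have "h (add_pow A (Suc n) x) = h (add_pow A n x \<oplus>\<^bsub>A\<^esub> x)"
      by (simp add: hr.R.add.nat_pow_Suc)
    also have "\<dots> = h (add_pow A n x) \<oplus>\<^bsub>B\<^esub> h x"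
      using x by (simp add: hr.hom_add)
    finally show ?case using Suc by (simp add: hr.S.add.nat_pow_Suc)
  qed
qed

lemma carrier_Quot: "carrier (A Quot I) = (\<lambda>x. I +>\<^bsub>A\<^esub> x) ` carrier A"
  unfolding FactRing_def A_RCOSETS_def RCOSETS_def a_r_coset_def by (simp add: image_def) blast

lemma zero_Quot: "\<zero>\<^bsub>A Quot I\<^esub> = I"
  unfolding FactRing_def by simp

lemma mem_arcos: "y \<in> H +>\<^bsub>G\<^esub> a \<longleftrightarrow> (\<exists>h\<in>H. y = h \<oplus>\<^bsub>G\<^esub> a)"
  unfolding a_r_coset_def' by blast

lemma mem_setadd: "y \<in> H <+>\<^bsub>G\<^esub> K \<longleftrightarrow> (\<exists>h\<in>H. \<exists>k\<in>K. y = h \<oplus>\<^bsub>G\<^esub> k)"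
  unfolding set_add_def' by blast

lemma tower_map_hom:
  assumes "\<And>i. t i \<in> ring_hom (R i) (R (Suc i))"
  shows "tower_map t m k \<in> ring_hom (R m) (R (m + k))"
proof (induction k)
  case 0
  have "id \<in> ring_hom (R m) (R m)" by (rule id_ring_hom)
  then show ?case by (simp add: id_def)
next
  case (Suc k)
  have "t (m + k) \<circ> tower_map t m k \<in> ring_hom (R m) (R (Suc (m + k)))"
    by (rule ring_hom_trans[OF Suc assms])
  then show ?case by (simp add: comp_def)
qed

locale ptower =
  fixes p :: nat and R :: "nat \<Rightarrow> 'a ring" and t :: "nat \<Rightarrow> 'a \<Rightarrow> 'a" and I0 :: "'a set"
  assumes prime: "Factorial_Ring.prime p" and pt: "preperfectoid_tower p R t I0"
begin

abbreviation "E \<equiv> ext_ideal R t I0"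
abbreviation "B \<equiv> Rbar R t I0"
abbreviation "T \<equiv> tbar R t I0"
abbreviation "F \<equiv> Frob_F p R t I0"
abbreviation "\<pi> i x \<equiv> E i +>\<^bsub>R i\<^esub> x"

lemma pit: "purely_inseparable_tower p R t I0"
  using pt unfolding preperfectoid_tower_def by simp

lemma crR: "cring (R i)" using pit unfolding purely_inseparable_tower_def by simp
lemma rR: "ring (R i)" using crR cring.axioms(1) by blast
lemma thom: "t i \<in> ring_hom (R i) (R (Suc i))"
  using pit unfolding purely_inseparable_tower_def by simp
lemma I0ideal: "ideal I0 (R 0)" using pit unfolding purely_inseparable_tower_def by simp
lemma pI0: "add_pow (R 0) p \<one>\<^bsub>R 0\<^esub> \<in> I0" using pit unfolding purely_inseparable_tower_def by simp
lemma Tinj: "inj_on (T i) (carrier (B i))" using pit unfolding purely_inseparable_tower_def by simp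
lemma Tfrob: "Y \<in> carrier (B (Suc i)) \<Longrightarrow> Y [^]\<^bsub>B (Suc i)\<^esub> p \<in> T i ` carrier (B i)"
  using pit unfolding purely_inseparable_tower_def by simp
lemma Fsurj: "F i ` carrier (B (Suc i)) = carrier (B i)"
  using pt unfolding preperfectoid_tower_def by simp

lemma tmhom: "tower_map t m k \<in> ring_hom (R m) (R (m + k))"
  by (rule tower_map_hom[where R=R and t=t]) (rule thom)

lemma tm0hom: "tower_map t 0 k \<in> ring_hom (R 0) (R k)"
  using tmhom[of 0 k] by simp

lemma gen_sub: "tower_map t 0 i ` I0 \<subseteq> carrier (R i)"
proof
  fix y assume "y \<in> tower_map t 0 i ` I0"
  then obtain x where x: "x \<in> I0" "y = tower_map t 0 i x" by blast
  have "x \<in> carrier (R 0)" using ideal.Icarr[OF I0ideal x(1)] .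
  then show "y \<in> carrier (R i)" using x(2) ring_hom_closed[OF tm0hom] by simp
qed

lemma Eideal: "ideal (E i) (R i)"
  unfolding ext_ideal_def by (rule ring.genideal_ideal[OF rR gen_sub])

lemma E_gen: "x \<in> I0 \<Longrightarrow> tower_map t 0 i x \<in> E i"
  unfolding ext_ideal_def using ring.genideal_self[OF rR gen_sub] by blast

lemma crB: "cring (B i)"
  unfolding Rbar_def by (rule ideal.quotient_is_cring[OF Eideal crR])
lemma rB: "ring (B i)" using crB cring.axioms(1) by blast

lemma pihom: "\<pi> i \<in> ring_hom (R i) (B i)"
  unfolding Rbar_def by (rule ideal.rcos_ring_hom[OF Eideal])

lemma carrB: "carrier (B i) = \<pi> i ` carrier (R i)"
  unfolding Rbar_def carrier_Quot ..

lemma zeroB: "\<zero>\<^bsub>B i\<^esub> = E i"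
  unfolding Rbar_def zero_Quot ..

lemma pi_E: "x \<in> E i \<Longrightarrow> \<pi> i x = \<zero>\<^bsub>B i\<^esub>"
proof -
  interpret ideal "E i" "R i" by (rule Eideal)
  assume "x \<in> E i" then show ?thesis unfolding zeroB by (rule a_rcos_const)
qed

lemma carrB_E: "U \<in> carrier (B i) \<Longrightarrow> \<exists>x. x \<in> carrier (R i) \<and> U = \<pi> i x"
  using carrB by blast

lemma Ecarr: "E i \<subseteq> carrier (R i)"
  using ideal.Icarr[OF Eideal] by blast

lemma t_E: "x \<in> E i \<Longrightarrow> t i x \<in> E (Suc i)"
proof -
  interpret h: ring_hom_ring "R i" "R (Suc i)" "t i"
    by (rule ring_hom_ringI2[OF rR rR thom])
  have id: "ideal {r \<in> carrier (R i). t i r \<in> E (Suc i)} (R i)"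
    by (rule h.ideal_vimage[OF Eideal])
  have "tower_map t 0 i ` I0 \<subseteq> {r \<in> carrier (R i). t i r \<in> E (Suc i)}"
  proof
    fix y assume y: "y \<in> tower_map t 0 i ` I0"
    then obtain x where x: "x \<in> I0" "y = tower_map t 0 i x" by blast
    have yc: "y \<in> carrier (R i)" using subsetD[OF gen_sub y] .
    have "t i y = tower_map t 0 (Suc i) x" using x(2) by simp
    then have "t i y \<in> E (Suc i)" using E_gen[OF x(1), of "Suc i"] by simp
    then show "y \<in> {r \<in> carrier (R i). t i r \<in> E (Suc i)}" using yc by simp
  qed
  then have "E i \<subseteq> {r \<in> carrier (R i). t i r \<in> E (Suc i)}"
    unfolding ext_ideal_def[of R t I0 i] by (rule ring.genideal_minimal[OF rR id])
  then show "x \<in> E i \<Longrightarrow> t i x \<in> E (Suc i)" by blast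
qed

lemma T_pi: assumes x: "x \<in> carrier (R i)" shows "T i (\<pi> i x) = \<pi> (Suc i) (t i x)"
proof -
  interpret h: ring_hom_ring "R i" "R (Suc i)" "t i"
    by (rule ring_hom_ringI2[OF rR rR thom])
  show ?thesis
    unfolding tbar_def
  proof (intro equalityI subsetI)
    fix y assume "y \<in> E (Suc i) <+>\<^bsub>R (Suc i)\<^esub> t i ` (E i +>\<^bsub>R i\<^esub> x)"
    then obtain e' k where e': "e' \<in> E (Suc i)" and k: "k \<in> t i ` (E i +>\<^bsub>R i\<^esub> x)"
      and y: "y = e' \<oplus>\<^bsub>R (Suc i)\<^esub> k"
      unfolding mem_setadd by blast
    obtain z where z: "z \<in> E i +>\<^bsub>R i\<^esub> x" "k = t i z" using k by blast
    obtain e where e: "e \<in> E i" "z = e \<oplus>\<^bsub>R i\<^esub> x" using z(1) unfolding mem_arcos by blast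
    have ec: "e \<in> carrier (R i)" "e' \<in> carrier (R (Suc i))" using e e' Ecarr by auto
    have tec: "t i e \<in> carrier (R (Suc i))" using ec by simp
    have txc: "t i x \<in> carrier (R (Suc i))" using x by simp
    have "y = e' \<oplus>\<^bsub>R (Suc i)\<^esub> (t i e \<oplus>\<^bsub>R (Suc i)\<^esub> t i x)"
      using y z(2) e(2) ec x by simp
    also have "\<dots> = (e' \<oplus>\<^bsub>R (Suc i)\<^esub> t i e) \<oplus>\<^bsub>R (Suc i)\<^esub> t i x"
      using ec(2) tec txc by (simp add: h.S.a_assoc)
    finally have y2: "y = (e' \<oplus>\<^bsub>R (Suc i)\<^esub> t i e) \<oplus>\<^bsub>R (Suc i)\<^esub> t i x" .
    have "e' \<oplus>\<^bsub>R (Suc i)\<^esub> t i e \<in> E (Suc i)"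
      using additive_subgroup.a_closed[OF ideal.axioms(1)[OF Eideal] e' t_E[OF e(1)]] .
    then show "y \<in> E (Suc i) +>\<^bsub>R (Suc i)\<^esub> t i x" unfolding mem_arcos using y2 by blast
  next
    fix y assume "y \<in> E (Suc i) +>\<^bsub>R (Suc i)\<^esub> t i x"
    then obtain e' where e': "e' \<in> E (Suc i)" "y = e' \<oplus>\<^bsub>R (Suc i)\<^esub> t i x"
      unfolding mem_arcos by blast
    have z: "\<zero>\<^bsub>R i\<^esub> \<in> E i"
      using additive_subgroup.zero_closed[OF ideal.axioms(1)[OF Eideal]] .
    have "x \<in> E i +>\<^bsub>R i\<^esub> x" unfolding mem_arcos using z x by force
    then have "t i x \<in> t i ` (E i +>\<^bsub>R i\<^esub> x)" by (rule imageI)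
    then show "y \<in> E (Suc i) <+>\<^bsub>R (Suc i)\<^esub> t i ` (E i +>\<^bsub>R i\<^esub> x)"
      unfolding mem_setadd using e' by blast
  qed
qed

lemma Thom: "T i \<in> ring_hom (B i) (B (Suc i))"
proof (rule ring_hom_memI)
  fix U assume "U \<in> carrier (B i)"
  then obtain x where x: "x \<in> carrier (R i)" "U = \<pi> i x" using carrB_E by blast
  show "T i U \<in> carrier (B (Suc i))"
    using x T_pi ring_hom_closed[OF pihom] ring_hom_closed[OF thom] by simp
next
  fix U Y assume "U \<in> carrier (B i)" "Y \<in> carrier (B i)"
  then obtain x y where x: "x \<in> carrier (R i)" "U = \<pi> i x" and y: "y \<in> carrier (R i)" "Y = \<pi> i y"
    using carrB_E by blast
  have "U \<otimes>\<^bsub>B i\<^esub> Y = \<pi> i (x \<otimes>\<^bsub>R i\<^esub> y)" using x y ring_hom_mult[OF pihom] by simp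
  then have "T i (U \<otimes>\<^bsub>B i\<^esub> Y) = \<pi> (Suc i) (t i x \<otimes>\<^bsub>R (Suc i)\<^esub> t i y)"
    using x y T_pi ring_hom_mult[OF thom] rR ring.ring_simprules(5) by metis
  then show "T i (U \<otimes>\<^bsub>B i\<^esub> Y) = T i U \<otimes>\<^bsub>B (Suc i)\<^esub> T i Y"
    using x y T_pi ring_hom_mult[OF pihom] ring_hom_closed[OF thom] by simp
  have "U \<oplus>\<^bsub>B i\<^esub> Y = \<pi> i (x \<oplus>\<^bsub>R i\<^esub> y)" using x y ring_hom_add[OF pihom] by simp
  then have "T i (U \<oplus>\<^bsub>B i\<^esub> Y) = \<pi> (Suc i) (t i x \<oplus>\<^bsub>R (Suc i)\<^esub> t i y)"
    using x y T_pi ring_hom_add[OF thom] rR ring.ring_simprules(1) by metis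
  then show "T i (U \<oplus>\<^bsub>B i\<^esub> Y) = T i U \<oplus>\<^bsub>B (Suc i)\<^esub> T i Y"
    using x y T_pi ring_hom_add[OF pihom] ring_hom_closed[OF thom] by simp
next
  have "\<one>\<^bsub>B i\<^esub> = \<pi> i \<one>\<^bsub>R i\<^esub>" using ring_hom_one[OF pihom] by simp
  then show "T i \<one>\<^bsub>B i\<^esub> = \<one>\<^bsub>B (Suc i)\<^esub>"
    using T_pi[of "\<one>\<^bsub>R i\<^esub>" i] ring_hom_one[OF thom] ring_hom_one[OF pihom] rR ring.ring_simprules(6)
    by metis
qed

lemma T_zero: "T i \<zero>\<^bsub>B i\<^esub> = \<zero>\<^bsub>B (Suc i)\<^esub>"
  by (rule ring_hom_zero[OF Thom rB rB])

lemma T_pow: "U \<in> carrier (B i) \<Longrightarrow> T i (U [^]\<^bsub>B i\<^esub> (n::nat)) = T i U [^]\<^bsub>B (Suc i)\<^esub> n"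
  using ring_hom_ring.hom_nat_pow[OF ring_hom_ringI2[OF rB rB Thom]] by blast

lemma F_ex1: "Z \<in> carrier (B (Suc i)) \<Longrightarrow>
   \<exists>!Y. Y \<in> carrier (B i) \<and> T i Y = Z [^]\<^bsub>B (Suc i)\<^esub> p"
  using Tfrob[of Z i] Tinj[of i] unfolding inj_on_def by blast

lemma F_spec: assumes "Z \<in> carrier (B (Suc i))"
  shows "F i Z \<in> carrier (B i)" "T i (F i Z) = Z [^]\<^bsub>B (Suc i)\<^esub> p"
  using theI'[OF F_ex1[OF assms]] unfolding Frob_F_def by auto

lemma F_unique: assumes "Z \<in> carrier (B (Suc i))" "Y \<in> carrier (B i)"
    "T i Y = Z [^]\<^bsub>B (Suc i)\<^esub> p"
  shows "F i Z = Y"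
  using F_ex1[OF assms(1)] F_spec[OF assms(1)] assms(2,3) by blast

lemma charB: "add_pow (B i) p \<one>\<^bsub>B i\<^esub> = \<zero>\<^bsub>B i\<^esub>"
proof -
  have one0: "\<one>\<^bsub>R 0\<^esub> \<in> carrier (R 0)" by (rule ring.ring_simprules(6)[OF rR])
  have "tower_map t 0 i (add_pow (R 0) p \<one>\<^bsub>R 0\<^esub>) = add_pow (R i) p (tower_map t 0 i \<one>\<^bsub>R 0\<^esub>)"
    by (rule hom_add_pow[OF tm0hom rR rR one0])
  then have "add_pow (R i) p \<one>\<^bsub>R i\<^esub> = tower_map t 0 i (add_pow (R 0) p \<one>\<^bsub>R 0\<^esub>)"
    using ring_hom_one[OF tm0hom] by simp
  then have "add_pow (R i) p \<one>\<^bsub>R i\<^esub> \<in> E i" using E_gen[OF pI0] by simp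
  then have "\<pi> i (add_pow (R i) p \<one>\<^bsub>R i\<^esub>) = \<zero>\<^bsub>B i\<^esub>" by (rule pi_E)
  moreover have "\<pi> i (add_pow (R i) p \<one>\<^bsub>R i\<^esub>) = add_pow (B i) p \<one>\<^bsub>B i\<^esub>"
  proof -
    have "\<pi> i (add_pow (R i) p \<one>\<^bsub>R i\<^esub>) = add_pow (B i) p (\<pi> i \<one>\<^bsub>R i\<^esub>)"
      by (rule hom_add_pow[OF pihom rR rB ring.ring_simprules(6)[OF rR]])
    then show ?thesis using ring_hom_one[OF pihom] by simp
  qed
  ultimately show ?thesis by simp
qed

end

context ptower begin

lemma freshB: "a \<in> carrier (B i) \<Longrightarrow> b \<in> carrier (B i) \<Longrightarrow>
  (a \<oplus>\<^bsub>B i\<^esub> b) [^]\<^bsub>B i\<^esub> p = a [^]\<^bsub>B i\<^esub> p \<oplus>\<^bsub>B i\<^esub> b [^]\<^bsub>B i\<^esub> p"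
  by (rule cring.freshman[OF crB prime charB])

lemma Fhom: "F i \<in> ring_hom (B (Suc i)) (B i)"
proof -
  interpret Bi: cring "B i" by (rule crB)
  interpret Bs: cring "B (Suc i)" by (rule crB)
  show ?thesis
  proof (rule ring_hom_memI)
    fix x assume "x \<in> carrier (B (Suc i))" then show "F i x \<in> carrier (B i)" by (rule F_spec)
  next
    fix x y assume x: "x \<in> carrier (B (Suc i))" and y: "y \<in> carrier (B (Suc i))"
    show "F i (x \<otimes>\<^bsub>B (Suc i)\<^esub> y) = F i x \<otimes>\<^bsub>B i\<^esub> F i y"
    proof (rule F_unique)
      show "T i (F i x \<otimes>\<^bsub>B i\<^esub> F i y) = (x \<otimes>\<^bsub>B (Suc i)\<^esub> y) [^]\<^bsub>B (Suc i)\<^esub> p"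
        using ring_hom_mult[OF Thom] F_spec x y Bs.nat_pow_distrib by simp
    qed (use x y F_spec in auto)
    show "F i (x \<oplus>\<^bsub>B (Suc i)\<^esub> y) = F i x \<oplus>\<^bsub>B i\<^esub> F i y"
    proof (rule F_unique)
      show "T i (F i x \<oplus>\<^bsub>B i\<^esub> F i y) = (x \<oplus>\<^bsub>B (Suc i)\<^esub> y) [^]\<^bsub>B (Suc i)\<^esub> p"
        using ring_hom_add[OF Thom] F_spec x y freshB by simp
    qed (use x y F_spec in auto)
  next
    show "F i \<one>\<^bsub>B (Suc i)\<^esub> = \<one>\<^bsub>B i\<^esub>"
      by (rule F_unique) (use ring_hom_one[OF Thom] in auto)
  qed
qed

lemma F_zero: "F i \<zero>\<^bsub>B (Suc i)\<^esub> = \<zero>\<^bsub>B i\<^esub>"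
  by (rule ring_hom_zero[OF Fhom rB rB])


end


lemma pow_Suc_gen: "x [^]\<^bsub>G\<^esub> (Suc n) = x [^]\<^bsub>G\<^esub> n \<otimes>\<^bsub>G\<^esub> x"
  by (simp add: nat_pow_def)
lemma pow_0_gen: "x [^]\<^bsub>G\<^esub> (0::nat) = \<one>\<^bsub>G\<^esub>"
  by (simp add: nat_pow_def)
lemma add_pow_Suc_gen: "add_pow G (Suc n) x = add_pow G n x \<oplus>\<^bsub>G\<^esub> x"
  by (simp add: add_pow_def nat_pow_def)
lemma add_pow_0_gen: "add_pow G (0::nat) x = \<zero>\<^bsub>G\<^esub>"
  by (simp add: add_pow_def nat_pow_def)

lemma (in cring) freshman_minus:
  assumes p: "Factorial_Ring.prime (p::nat)" and ch: "add_pow R p \<one> = \<zero>"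
    and a: "a \<in> carrier R" and b: "b \<in> carrier R"
  shows "(a \<ominus> b) [^] p = a [^] p \<ominus> b [^] p"
proof -
  have "((a \<ominus> b) \<oplus> b) [^] p = (a \<ominus> b) [^] p \<oplus> b [^] p"
    by (rule freshman[OF p ch]) (use a b in auto)
  moreover have "(a \<ominus> b) \<oplus> b = a" using a b by algebra
  ultimately have "a [^] p = (a \<ominus> b) [^] p \<oplus> b [^] p" by simp
  then show ?thesis using a b by (simp add: a_assoc a_minus_def r_neg)
qed

context ptower begin

abbreviation "S \<equiv> small_tilt p R t I0"
abbreviation "J \<equiv> small_tilt_ideal p R t I0"

lemma S_carr: "f \<in> carrier S \<longleftrightarrow> (\<forall>i. f i \<in> carrier (B i) \<and> F i (f (Suc i)) = f i)"
  unfolding small_tilt_def by simp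

lemma S_ops: "f \<otimes>\<^bsub>S\<^esub> g = (\<lambda>i. f i \<otimes>\<^bsub>B i\<^esub> g i)" "f \<oplus>\<^bsub>S\<^esub> g = (\<lambda>i. f i \<oplus>\<^bsub>B i\<^esub> g i)"
  "\<one>\<^bsub>S\<^esub> = (\<lambda>i. \<one>\<^bsub>B i\<^esub>)" "\<zero>\<^bsub>S\<^esub> = (\<lambda>i. \<zero>\<^bsub>B i\<^esub>)"
  unfolding small_tilt_def by simp_all

lemma Fh: "ring_hom_ring (B (Suc i)) (B i) (F i)" by (rule ring_hom_ringI2[OF rB rB Fhom])
lemma Th: "ring_hom_ring (B i) (B (Suc i)) (T i)" by (rule ring_hom_ringI2[OF rB rB Thom])

lemma F_inv: "a \<in> carrier (B (Suc i)) \<Longrightarrow> F i (\<ominus>\<^bsub>B (Suc i)\<^esub> a) = \<ominus>\<^bsub>B i\<^esub> F i a"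
proof -
  interpret h: ring_hom_ring "B (Suc i)" "B i" "F i" by (rule Fh)
  show "a \<in> carrier (B (Suc i)) \<Longrightarrow> ?thesis" by (rule h.hom_a_inv)
qed

lemma F_pow: "a \<in> carrier (B (Suc i)) \<Longrightarrow> F i (a [^]\<^bsub>B (Suc i)\<^esub> (n::nat)) = F i a [^]\<^bsub>B i\<^esub> n"
  by (rule ring_hom_ring.hom_nat_pow[OF Fh])

lemmas F_add = ring_hom_add[OF Fhom]
lemmas F_mult = ring_hom_mult[OF Fhom]
lemmas F_one = ring_hom_one[OF Fhom]
lemmas F_closed = ring_hom_closed[OF Fhom]

lemma crS: "cring S"
proof (rule cringI)
  show "abelian_group S"
  proof (rule abelian_groupI)
    fix x y assume "x \<in> carrier S" "y \<in> carrier S"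
    then show "x \<oplus>\<^bsub>S\<^esub> y \<in> carrier S" unfolding S_carr S_ops by (simp add: F_add ring.ring_simprules(1)[OF rB])
  next
    show "\<zero>\<^bsub>S\<^esub> \<in> carrier S" unfolding S_carr S_ops by (simp add: F_zero ring.ring_simprules(2)[OF rB])
  next
    fix x y z assume "x \<in> carrier S" "y \<in> carrier S" "z \<in> carrier S"
    then show "x \<oplus>\<^bsub>S\<^esub> y \<oplus>\<^bsub>S\<^esub> z = x \<oplus>\<^bsub>S\<^esub> (y \<oplus>\<^bsub>S\<^esub> z)"
      unfolding S_carr S_ops by (simp add: ring.ring_simprules(7)[OF rB])
  next
    fix x y assume "x \<in> carrier S" "y \<in> carrier S"
    then show "x \<oplus>\<^bsub>S\<^esub> y = y \<oplus>\<^bsub>S\<^esub> x" unfolding S_carr S_ops by (simp add: ring.ring_simprules(10)[OF rB])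
  next
    fix x assume "x \<in> carrier S"
    then show "\<zero>\<^bsub>S\<^esub> \<oplus>\<^bsub>S\<^esub> x = x" unfolding S_carr S_ops by (simp add: ring.ring_simprules(8)[OF rB])
  next
    fix x assume x: "x \<in> carrier S"
    define y where "y = (\<lambda>i. \<ominus>\<^bsub>B i\<^esub> x i)"
    have "y \<in> carrier S" using x unfolding S_carr y_def by (simp add: F_inv ring.ring_simprules(3)[OF rB])
    moreover have "y \<oplus>\<^bsub>S\<^esub> x = \<zero>\<^bsub>S\<^esub>" using x unfolding S_carr S_ops y_def
      by (simp add: ring.ring_simprules(9)[OF rB])
    ultimately show "\<exists>y\<in>carrier S. y \<oplus>\<^bsub>S\<^esub> x = \<zero>\<^bsub>S\<^esub>" by blast
  qed
next
  show "comm_monoid S"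
  proof (rule comm_monoidI)
    fix x y assume "x \<in> carrier S" "y \<in> carrier S"
    then show "x \<otimes>\<^bsub>S\<^esub> y \<in> carrier S" unfolding S_carr S_ops by (simp add: F_mult ring.ring_simprules(5)[OF rB])
  next
    show "\<one>\<^bsub>S\<^esub> \<in> carrier S" unfolding S_carr S_ops by (simp add: F_one ring.ring_simprules(6)[OF rB])
  next
    fix x y z assume "x \<in> carrier S" "y \<in> carrier S" "z \<in> carrier S"
    then show "x \<otimes>\<^bsub>S\<^esub> y \<otimes>\<^bsub>S\<^esub> z = x \<otimes>\<^bsub>S\<^esub> (y \<otimes>\<^bsub>S\<^esub> z)"
      unfolding S_carr S_ops by (simp add: ring.ring_simprules(11)[OF rB])
  next
    fix x assume "x \<in> carrier S"
    then show "\<one>\<^bsub>S\<^esub> \<otimes>\<^bsub>S\<^esub> x = x" unfolding S_carr S_ops by (simp add: ring.ring_simprules(12)[OF rB])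
  next
    fix x y assume "x \<in> carrier S" "y \<in> carrier S"
    then show "x \<otimes>\<^bsub>S\<^esub> y = y \<otimes>\<^bsub>S\<^esub> x" unfolding S_carr S_ops by (simp add: cring.cring_simprules(14)[OF crB])
  qed
next
  fix x y z assume "x \<in> carrier S" "y \<in> carrier S" "z \<in> carrier S"
  then show "(x \<oplus>\<^bsub>S\<^esub> y) \<otimes>\<^bsub>S\<^esub> z = x \<otimes>\<^bsub>S\<^esub> z \<oplus>\<^bsub>S\<^esub> y \<otimes>\<^bsub>S\<^esub> z"
    unfolding S_carr S_ops by (simp add: ring.ring_simprules(13)[OF rB])
qed

end


context ptower begin

lemma S_mem: "f \<in> carrier S \<Longrightarrow> f i \<in> carrier (B i)" unfolding S_carr by blast
lemma S_F: "f \<in> carrier S \<Longrightarrow> F i (f (Suc i)) = f i" unfolding S_carr by blast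

lemma S_pow: "f [^]\<^bsub>S\<^esub> (n::nat) = (\<lambda>i. f i [^]\<^bsub>B i\<^esub> n)"
  by (induction n) (simp_all add: pow_Suc_gen pow_0_gen S_ops)

lemma S_add_pow: "add_pow S (n::nat) f = (\<lambda>i. add_pow (B i) n (f i))"
  by (induction n) (simp_all add: add_pow_Suc_gen add_pow_0_gen S_ops)

lemma S_inv: assumes x: "x \<in> carrier S" shows "\<ominus>\<^bsub>S\<^esub> x = (\<lambda>i. \<ominus>\<^bsub>B i\<^esub> x i)"
proof -
  interpret cring S by (rule crS)
  define y where "y = (\<lambda>i. \<ominus>\<^bsub>B i\<^esub> x i)"
  have "y \<in> carrier S" using x unfolding S_carr y_def by (simp add: F_inv ring.ring_simprules(3)[OF rB])
  moreover have "y \<oplus>\<^bsub>S\<^esub> x = \<zero>\<^bsub>S\<^esub>" using x unfolding S_carr S_ops y_def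
    by (simp add: ring.ring_simprules(9)[OF rB])
  ultimately show ?thesis unfolding y_def[symmetric] using minus_equality x by blast
qed

lemma S_minus: "x \<in> carrier S \<Longrightarrow> y \<in> carrier S \<Longrightarrow> x \<ominus>\<^bsub>S\<^esub> y = (\<lambda>i. x i \<ominus>\<^bsub>B i\<^esub> y i)"
  unfolding a_minus_def by (simp add: S_inv S_ops)

lemma charS: "add_pow S p \<one>\<^bsub>S\<^esub> = \<zero>\<^bsub>S\<^esub>"
  unfolding S_add_pow S_ops by (simp add: charB)

lemma freshS_minus: "a \<in> carrier S \<Longrightarrow> b \<in> carrier S \<Longrightarrow>
   (a \<ominus>\<^bsub>S\<^esub> b) [^]\<^bsub>S\<^esub> p = a [^]\<^bsub>S\<^esub> p \<ominus>\<^bsub>S\<^esub> b [^]\<^bsub>S\<^esub> p"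
  by (rule cring.freshman_minus[OF crS prime charS])

lemma freshS: "a \<in> carrier S \<Longrightarrow> b \<in> carrier S \<Longrightarrow>
   (a \<oplus>\<^bsub>S\<^esub> b) [^]\<^bsub>S\<^esub> p = a [^]\<^bsub>S\<^esub> p \<oplus>\<^bsub>S\<^esub> b [^]\<^bsub>S\<^esub> p"
  by (rule cring.freshman[OF crS prime charS])

lemma TF: assumes f: "f \<in> carrier S" shows "T k (f k) = f (Suc k) [^]\<^bsub>B (Suc k)\<^esub> p"
proof -
  have "T k (F k (f (Suc k))) = f (Suc k) [^]\<^bsub>B (Suc k)\<^esub> p" by (rule F_spec(2)[OF S_mem[OF f]])
  then show ?thesis using S_F[OF f, of k] by simp
qed

lemma P0pow: assumes f: "f \<in> carrier S" and f0: "f 0 = \<zero>\<^bsub>B 0\<^esub>"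
  shows "f k [^]\<^bsub>B k\<^esub> (p ^ k) = \<zero>\<^bsub>B k\<^esub>"
proof (induction k)
  case 0
  interpret B0: cring "B 0" by (rule crB)
  show ?case using f0 by (simp add: pow_Suc_gen pow_0_gen)
next
  case (Suc k)
  interpret Bs: cring "B (Suc k)" by (rule crB)
  have fc: "f (Suc k) \<in> carrier (B (Suc k))" using S_mem[OF f] .
  have "f (Suc k) [^]\<^bsub>B (Suc k)\<^esub> (p ^ Suc k) = (f (Suc k) [^]\<^bsub>B (Suc k)\<^esub> p) [^]\<^bsub>B (Suc k)\<^esub> (p ^ k)"
    using Bs.nat_pow_pow[OF fc, of p "p ^ k"] by simp
  also have "\<dots> = T k (f k) [^]\<^bsub>B (Suc k)\<^esub> (p ^ k)" using TF[OF f] by simp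
  also have "\<dots> = T k (f k [^]\<^bsub>B k\<^esub> (p ^ k))" using T_pow[OF S_mem[OF f]] by simp
  also have "\<dots> = \<zero>\<^bsub>B (Suc k)\<^esub>" using Suc T_zero by simp
  finally show ?case .
qed

end

context ptower begin

definition b1 where
  "b1 = (SOME b. b \<in> carrier (R 1) \<and> (\<forall>i. {Z \<in> carrier (B (Suc i)). F i Z = \<zero>\<^bsub>B i\<^esub>}
       = \<pi> (Suc i) ` (Idl\<^bsub>R (Suc i)\<^esub> (tower_map t 1 i ` (PIdl\<^bsub>R 1\<^esub> b)))))"

lemma b1: "b1 \<in> carrier (R 1) \<and> (\<forall>i. {Z \<in> carrier (B (Suc i)). F i Z = \<zero>\<^bsub>B i\<^esub>}
       = \<pi> (Suc i) ` (Idl\<^bsub>R (Suc i)\<^esub> (tower_map t 1 i ` (PIdl\<^bsub>R 1\<^esub> b1))))"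
proof -
  have P: "\<exists>I1. (\<exists>b\<in>carrier (R 1). I1 = PIdl\<^bsub>R 1\<^esub> b) \<and>
           I1 [^]\<^bsub>ideals_set (R 1)\<^esub> p = E 1 \<and>
           (\<forall>i. {Z \<in> carrier (B (Suc i)). F i Z = \<zero>\<^bsub>B i\<^esub>}
                = \<pi> (Suc i) ` (Idl\<^bsub>R (Suc i)\<^esub> (tower_map t 1 i ` I1)))"
    using conjunct1[OF conjunct2[OF conjunct2[OF conjunct2[OF pt[unfolded preperfectoid_tower_def]]]]] .
  then obtain I1 b where b: "b \<in> carrier (R 1)" "I1 = PIdl\<^bsub>R 1\<^esub> b" and
    K: "\<forall>i. {Z \<in> carrier (B (Suc i)). F i Z = \<zero>\<^bsub>B i\<^esub>}
       = \<pi> (Suc i) ` (Idl\<^bsub>R (Suc i)\<^esub> (tower_map t 1 i ` I1))"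
    by (elim exE conjE bexE)
  have "\<exists>b. b \<in> carrier (R 1) \<and> (\<forall>i. {Z \<in> carrier (B (Suc i)). F i Z = \<zero>\<^bsub>B i\<^esub>}
       = \<pi> (Suc i) ` (Idl\<^bsub>R (Suc i)\<^esub> (tower_map t 1 i ` (PIdl\<^bsub>R 1\<^esub> b))))"
    using K b by (intro exI[of _ b]) simp
  then show ?thesis unfolding b1_def by (rule someI_ex)
qed

definition u where "u i = \<pi> (Suc i) (tower_map t 1 i b1)"

lemma tm1hom: "tower_map t 1 i \<in> ring_hom (R 1) (R (Suc i))"
  using tmhom[of 1 i] by simp

lemma tm1b_c: "tower_map t 1 i b1 \<in> carrier (R (Suc i))"
  using ring_hom_closed[OF tm1hom] b1 by blast

lemma u_c: "u i \<in> carrier (B (Suc i))"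
  unfolding u_def using ring_hom_closed[OF pihom tm1b_c] .

lemma Idl_eq: "Idl\<^bsub>R (Suc i)\<^esub> (tower_map t 1 i ` (PIdl\<^bsub>R 1\<^esub> b1)) = PIdl\<^bsub>R (Suc i)\<^esub> (tower_map t 1 i b1)"
proof -
  interpret R1: cring "R 1" by (rule crR)
  interpret Rs: cring "R (Suc i)" by (rule crR)
  let ?h = "tower_map t 1 i"
  have b1c: "b1 \<in> carrier (R 1)" using b1 by blast
  have sub: "?h ` (PIdl\<^bsub>R 1\<^esub> b1) \<subseteq> PIdl\<^bsub>R (Suc i)\<^esub> (?h b1)"
  proof
    fix y assume "y \<in> ?h ` (PIdl\<^bsub>R 1\<^esub> b1)"
    then obtain z where z: "z \<in> PIdl\<^bsub>R 1\<^esub> b1" "y = ?h z" by (rule imageE)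
    then obtain x where x: "x \<in> carrier (R 1)" "y = ?h (x \<otimes>\<^bsub>R 1\<^esub> b1)"
      unfolding cgenideal_def by auto
    then have "y = ?h x \<otimes>\<^bsub>R (Suc i)\<^esub> ?h b1" using ring_hom_mult[OF tm1hom] b1c by simp
    then show "y \<in> PIdl\<^bsub>R (Suc i)\<^esub> (?h b1)" unfolding cgenideal_def
      using ring_hom_closed[OF tm1hom x(1)] by blast
  qed
  have idl: "ideal (PIdl\<^bsub>R (Suc i)\<^esub> (?h b1)) (R (Suc i))" by (rule Rs.cgenideal_ideal[OF tm1b_c])
  have subc: "?h ` (PIdl\<^bsub>R 1\<^esub> b1) \<subseteq> carrier (R (Suc i))"
    using sub ideal.Icarr[OF idl] by (meson subsetD subsetI)
  show ?thesis
  proof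
    show "Idl\<^bsub>R (Suc i)\<^esub> (?h ` (PIdl\<^bsub>R 1\<^esub> b1)) \<subseteq> PIdl\<^bsub>R (Suc i)\<^esub> (?h b1)"
      by (rule Rs.genideal_minimal[OF idl sub])
    have "b1 \<in> PIdl\<^bsub>R 1\<^esub> b1" by (rule R1.cgenideal_self[OF b1c])
    then have "?h b1 \<in> ?h ` (PIdl\<^bsub>R 1\<^esub> b1)" by (rule imageI)
    then have "?h b1 \<in> Idl\<^bsub>R (Suc i)\<^esub> (?h ` (PIdl\<^bsub>R 1\<^esub> b1))"
      using Rs.genideal_self[OF subc] by (rule subsetD[rotated])
    then show "PIdl\<^bsub>R (Suc i)\<^esub> (?h b1) \<subseteq> Idl\<^bsub>R (Suc i)\<^esub> (?h ` (PIdl\<^bsub>R 1\<^esub> b1))"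
      by (rule Rs.cgenideal_minimal[OF Rs.genideal_ideal[OF subc]])
  qed
qed

lemma kerF_u: assumes Z: "Z \<in> carrier (B (Suc i))"
  shows "F i Z = \<zero>\<^bsub>B i\<^esub> \<longleftrightarrow> (\<exists>y\<in>carrier (B (Suc i)). Z = y \<otimes>\<^bsub>B (Suc i)\<^esub> u i)"
proof -
  have K: "{Z \<in> carrier (B (Suc i)). F i Z = \<zero>\<^bsub>B i\<^esub>} = \<pi> (Suc i) ` (PIdl\<^bsub>R (Suc i)\<^esub> (tower_map t 1 i b1))"
    using b1 Idl_eq by simp
  have "F i Z = \<zero>\<^bsub>B i\<^esub> \<longleftrightarrow> Z \<in> \<pi> (Suc i) ` (PIdl\<^bsub>R (Suc i)\<^esub> (tower_map t 1 i b1))"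
    using K Z by blast
  also have "\<dots> \<longleftrightarrow> (\<exists>y\<in>carrier (B (Suc i)). Z = y \<otimes>\<^bsub>B (Suc i)\<^esub> u i)"
  proof
    assume "Z \<in> \<pi> (Suc i) ` (PIdl\<^bsub>R (Suc i)\<^esub> (tower_map t 1 i b1))"
    then obtain x where x: "x \<in> carrier (R (Suc i))" "Z = \<pi> (Suc i) (x \<otimes>\<^bsub>R (Suc i)\<^esub> tower_map t 1 i b1)"
      unfolding cgenideal_def by blast
    then have "Z = \<pi> (Suc i) x \<otimes>\<^bsub>B (Suc i)\<^esub> u i" unfolding u_def
      using ring_hom_mult[OF pihom x(1) tm1b_c] by simp
    then show "\<exists>y\<in>carrier (B (Suc i)). Z = y \<otimes>\<^bsub>B (Suc i)\<^esub> u i"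
      using ring_hom_closed[OF pihom x(1)] by blast
  next
    assume "\<exists>y\<in>carrier (B (Suc i)). Z = y \<otimes>\<^bsub>B (Suc i)\<^esub> u i"
    then obtain y where y: "y \<in> carrier (B (Suc i))" "Z = y \<otimes>\<^bsub>B (Suc i)\<^esub> u i" by blast
    obtain x where x: "x \<in> carrier (R (Suc i))" "y = \<pi> (Suc i) x" using carrB_E[OF y(1)] by blast
    have "Z = \<pi> (Suc i) (x \<otimes>\<^bsub>R (Suc i)\<^esub> tower_map t 1 i b1)"
      using y(2) x ring_hom_mult[OF pihom x(1) tm1b_c] unfolding u_def by simp
    then show "Z \<in> \<pi> (Suc i) ` (PIdl\<^bsub>R (Suc i)\<^esub> (tower_map t 1 i b1))"
      unfolding cgenideal_def using x(1) by blast
  qed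
  finally show ?thesis .
qed

end

context ptower begin

primrec wseq :: "nat \<Rightarrow> 'a set" where
  "wseq 0 = u 0"
| "wseq (Suc k) = (SOME z. z \<in> carrier (B (Suc (Suc k))) \<and> F (Suc k) z = wseq k)"

lemma wseq_c: "wseq k \<in> carrier (B (Suc k))"
proof (induction k)
  case 0 then show ?case using u_c by simp
next
  case (Suc k)
  then have "\<exists>z. z \<in> carrier (B (Suc (Suc k))) \<and> F (Suc k) z = wseq k"
    using Fsurj[of "Suc k"] by (metis imageE)
  then have "(\<lambda>z. z \<in> carrier (B (Suc (Suc k))) \<and> F (Suc k) z = wseq k) (SOME z. z \<in> carrier (B (Suc (Suc k))) \<and> F (Suc k) z = wseq k)" by (rule someI_ex)
  then show ?case by simp
qed

lemma wseq_F: "F (Suc k) (wseq (Suc k)) = wseq k"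
proof -
  have "\<exists>z. z \<in> carrier (B (Suc (Suc k))) \<and> F (Suc k) z = wseq k"
    using Fsurj[of "Suc k"] wseq_c[of k] by (metis imageE)
  then have "(\<lambda>z. z \<in> carrier (B (Suc (Suc k))) \<and> F (Suc k) z = wseq k) (SOME z. z \<in> carrier (B (Suc (Suc k))) \<and> F (Suc k) z = wseq k)" by (rule someI_ex)
  then show ?thesis by simp
qed

definition w :: "nat \<Rightarrow> 'a set" where
  "w k = (case k of 0 \<Rightarrow> \<zero>\<^bsub>B 0\<^esub> | Suc j \<Rightarrow> wseq j)"

lemma w0: "w 0 = \<zero>\<^bsub>B 0\<^esub>" unfolding w_def by simp
lemma wSuc: "w (Suc j) = wseq j" unfolding w_def by simp

lemma F0u: "F 0 (u 0) = \<zero>\<^bsub>B 0\<^esub>"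
proof -
  interpret B1: cring "B (Suc 0)" by (rule crB)
  have "u 0 = \<one>\<^bsub>B (Suc 0)\<^esub> \<otimes>\<^bsub>B (Suc 0)\<^esub> u 0" using u_c[of 0] by simp
  then show ?thesis using kerF_u[OF u_c[of 0]] by blast
qed

lemma w_S: "w \<in> carrier S"
  unfolding S_carr
proof
  fix i show "w i \<in> carrier (B i) \<and> F i (w (Suc i)) = w i"
  proof (cases i)
    case 0
    then show ?thesis using F0u ring.ring_simprules(2)[OF rB] by (simp add: w0 wSuc)
  next
    case (Suc j)
    then show ?thesis using wseq_c wseq_F by (simp add: wSuc)
  qed
qed

lemma T_u: "T (Suc n) (u n) = u (Suc n)"
proof -
  have "T (Suc n) (u n) = \<pi> (Suc (Suc n)) (t (Suc n) (tower_map t 1 n b1))"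
    unfolding u_def by (rule T_pi[OF tm1b_c])
  also have "t (Suc n) (tower_map t 1 n b1) = tower_map t 1 (Suc n) b1" by simp
  finally show ?thesis unfolding u_def .
qed

lemma wU: "w (Suc n) [^]\<^bsub>B (Suc n)\<^esub> (p ^ n) = u n"
proof (induction n)
  case 0
  interpret B1: cring "B (Suc 0)" by (rule crB)
  show ?case using u_c[of 0] by (simp add: wSuc)
next
  case (Suc n)
  interpret Bs: cring "B (Suc (Suc n))" by (rule crB)
  have wc: "w (Suc (Suc n)) \<in> carrier (B (Suc (Suc n)))" using S_mem[OF w_S] .
  have "w (Suc (Suc n)) [^]\<^bsub>B (Suc (Suc n))\<^esub> (p ^ Suc n)
      = (w (Suc (Suc n)) [^]\<^bsub>B (Suc (Suc n))\<^esub> p) [^]\<^bsub>B (Suc (Suc n))\<^esub> (p ^ n)"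
    using Bs.nat_pow_pow[OF wc, of p "p ^ n"] by simp
  also have "\<dots> = T (Suc n) (w (Suc n)) [^]\<^bsub>B (Suc (Suc n))\<^esub> (p ^ n)" using TF[OF w_S] by simp
  also have "\<dots> = T (Suc n) (w (Suc n) [^]\<^bsub>B (Suc n)\<^esub> (p ^ n))" using T_pow[OF S_mem[OF w_S]] by simp
  also have "\<dots> = u (Suc n)" using Suc T_u by simp
  finally show ?case .
qed

lemma kerF_w: "Z \<in> carrier (B (Suc i)) \<Longrightarrow>
  F i Z = \<zero>\<^bsub>B i\<^esub> \<longleftrightarrow> (\<exists>y\<in>carrier (B (Suc i)). Z = y \<otimes>\<^bsub>B (Suc i)\<^esub> w (Suc i) [^]\<^bsub>B (Suc i)\<^esub> (p ^ i))"
  using kerF_u wU by simp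

lemma wpow: "w k [^]\<^bsub>B k\<^esub> (p ^ k) = \<zero>\<^bsub>B k\<^esub>"
  by (rule P0pow[OF w_S w0])

end

context ptower begin

primrec Fc :: "nat \<Rightarrow> nat \<Rightarrow> 'a set \<Rightarrow> 'a set" where
  "Fc k 0 = (\<lambda>x. x)"
| "Fc k (Suc j) = Fc k j \<circ> F (k + j)"

lemma Fc_hom: "Fc k j \<in> ring_hom (B (k + j)) (B k)"
proof (induction j)
  case 0 then show ?case by (auto intro!: ring_hom_memI)
next
  case (Suc j)
  have "Fc k j \<circ> F (k + j) \<in> ring_hom (B (Suc (k + j))) (B k)"
    by (rule ring_hom_trans[OF Fhom Suc])
  then show ?case by (simp add: comp_def)
qed

lemma Fc_S: "f \<in> carrier S \<Longrightarrow> Fc k j (f (k + j)) = f k"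
  by (induction j) (simp_all add: S_F)

lemma Fc_bottom: "F k (Fc (Suc k) j x) = Fc k (Suc j) x"
proof (induction j arbitrary: x)
  case 0 then show ?case by simp
next
  case (Suc j)
  have "F k (Fc (Suc k) (Suc j) x) = F k (Fc (Suc k) j (F (Suc k + j) x))" by simp
  also have "\<dots> = Fc k (Suc j) (F (Suc k + j) x)" by (rule Suc)
  also have "\<dots> = Fc k (Suc (Suc j)) x" by simp
  finally show ?case .
qed

lemma Fc_zero: "Fc k j \<zero>\<^bsub>B (k + j)\<^esub> = \<zero>\<^bsub>B k\<^esub>"
  by (rule ring_hom_zero[OF Fc_hom rB rB])

lemma kerFc: assumes x: "x \<in> carrier (B (k + j))"
  shows "Fc k j x = \<zero>\<^bsub>B k\<^esub> \<longleftrightarrow> (\<exists>y\<in>carrier (B (k + j)). x = y \<otimes>\<^bsub>B (k + j)\<^esub> w (k + j) [^]\<^bsub>B (k + j)\<^esub> (p ^ k))"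
proof
  assume "\<exists>y\<in>carrier (B (k + j)). x = y \<otimes>\<^bsub>B (k + j)\<^esub> w (k + j) [^]\<^bsub>B (k + j)\<^esub> (p ^ k)"
  then obtain y where y: "y \<in> carrier (B (k + j))" "x = y \<otimes>\<^bsub>B (k + j)\<^esub> w (k + j) [^]\<^bsub>B (k + j)\<^esub> (p ^ k)" by blast
  interpret h: ring_hom_ring "B (k + j)" "B k" "Fc k j" by (rule ring_hom_ringI2[OF rB rB Fc_hom])
  interpret Bk: cring "B k" by (rule crB)
  have wc: "w (k + j) \<in> carrier (B (k + j))" by (rule S_mem[OF w_S])
  have "Fc k j x = Fc k j y \<otimes>\<^bsub>B k\<^esub> Fc k j (w (k + j)) [^]\<^bsub>B k\<^esub> (p ^ k)"
    using y wc h.hom_nat_pow by simp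
  also have "\<dots> = Fc k j y \<otimes>\<^bsub>B k\<^esub> \<zero>\<^bsub>B k\<^esub>" using Fc_S[OF w_S] wpow by simp
  also have "\<dots> = \<zero>\<^bsub>B k\<^esub>" using y by simp
  finally show "Fc k j x = \<zero>\<^bsub>B k\<^esub>" .
next
  show "Fc k j x = \<zero>\<^bsub>B k\<^esub> \<Longrightarrow> \<exists>y\<in>carrier (B (k + j)). x = y \<otimes>\<^bsub>B (k + j)\<^esub> w (k + j) [^]\<^bsub>B (k + j)\<^esub> (p ^ k)"
    using x
  proof (induction j arbitrary: x)
    case 0
    interpret Bk: cring "B k" by (rule crB)
    have "x = \<zero>\<^bsub>B k\<^esub>" using 0 by simp
    then show ?case using S_mem[OF w_S, of k] by (intro bexI[of _ "\<zero>\<^bsub>B k\<^esub>"]) simp_all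
  next
    case (Suc j)
    define n where "n = k + j"
    interpret Bs: cring "B (Suc n)" by (rule crB)
    interpret Bn: cring "B n" by (rule crB)
    interpret Fh: ring_hom_ring "B (Suc n)" "B n" "F n" by (rule Fh)
    have xc: "x \<in> carrier (B (Suc n))" using Suc.prems unfolding n_def by simp
    have "Fc k j (F n x) = \<zero>\<^bsub>B k\<^esub>" using Suc.prems unfolding n_def by simp
    then obtain y where y: "y \<in> carrier (B n)" "F n x = y \<otimes>\<^bsub>B n\<^esub> w n [^]\<^bsub>B n\<^esub> (p ^ k)"
      using Suc.IH[of "F n x"] F_closed[OF xc] unfolding n_def by blast
    obtain y' where y': "y' \<in> carrier (B (Suc n))" "y = F n y'" using y(1) Fsurj[of n] by blast
    define v where "v = w (Suc n) [^]\<^bsub>B (Suc n)\<^esub> (p ^ k)"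
    have wc: "w (Suc n) \<in> carrier (B (Suc n))" by (rule S_mem[OF w_S])
    have vc: "v \<in> carrier (B (Suc n))" unfolding v_def using wc by simp
    have "F n (y' \<otimes>\<^bsub>B (Suc n)\<^esub> v) = y \<otimes>\<^bsub>B n\<^esub> w n [^]\<^bsub>B n\<^esub> (p ^ k)"
      unfolding v_def using y' wc Fh.hom_nat_pow S_F[OF w_S] by simp
    moreover have "F n (x \<ominus>\<^bsub>B (Suc n)\<^esub> y' \<otimes>\<^bsub>B (Suc n)\<^esub> v) = F n x \<ominus>\<^bsub>B n\<^esub> F n (y' \<otimes>\<^bsub>B (Suc n)\<^esub> v)"
      unfolding a_minus_def using xc y'(1) vc by (simp add: F_add F_inv)
    ultimately have "F n (x \<ominus>\<^bsub>B (Suc n)\<^esub> y' \<otimes>\<^bsub>B (Suc n)\<^esub> v) = \<zero>\<^bsub>B n\<^esub>"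
      using y(1) y(2) wc S_mem[OF w_S, of n] by simp
    then obtain z where z: "z \<in> carrier (B (Suc n))"
      "x \<ominus>\<^bsub>B (Suc n)\<^esub> y' \<otimes>\<^bsub>B (Suc n)\<^esub> v = z \<otimes>\<^bsub>B (Suc n)\<^esub> w (Suc n) [^]\<^bsub>B (Suc n)\<^esub> (p ^ n)"
      using kerF_w[of "x \<ominus>\<^bsub>B (Suc n)\<^esub> y' \<otimes>\<^bsub>B (Suc n)\<^esub> v" n] xc y'(1) vc by auto
    have le: "p ^ k \<le> p ^ n" unfolding n_def using prime_gt_0_nat[OF prime]
      by (simp add: power_increasing)
    define a where "a = w (Suc n) [^]\<^bsub>B (Suc n)\<^esub> (p ^ n - p ^ k)"
    have ac: "a \<in> carrier (B (Suc n))" unfolding a_def using wc by simp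
    have "w (Suc n) [^]\<^bsub>B (Suc n)\<^esub> (p ^ n) = a \<otimes>\<^bsub>B (Suc n)\<^esub> v"
      unfolding a_def v_def using Bs.nat_pow_mult[OF wc, of "p ^ n - p ^ k" "p ^ k"] le by simp
    then have "x \<ominus>\<^bsub>B (Suc n)\<^esub> y' \<otimes>\<^bsub>B (Suc n)\<^esub> v = z \<otimes>\<^bsub>B (Suc n)\<^esub> (a \<otimes>\<^bsub>B (Suc n)\<^esub> v)"
      using z(2) by simp
    then have eq: "x \<ominus>\<^bsub>B (Suc n)\<^esub> y' \<otimes>\<^bsub>B (Suc n)\<^esub> v = z \<otimes>\<^bsub>B (Suc n)\<^esub> (a \<otimes>\<^bsub>B (Suc n)\<^esub> v)" .
    have "x = (x \<ominus>\<^bsub>B (Suc n)\<^esub> y' \<otimes>\<^bsub>B (Suc n)\<^esub> v) \<oplus>\<^bsub>B (Suc n)\<^esub> y' \<otimes>\<^bsub>B (Suc n)\<^esub> v"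
      using xc y'(1) vc by algebra
    also have "\<dots> = z \<otimes>\<^bsub>B (Suc n)\<^esub> (a \<otimes>\<^bsub>B (Suc n)\<^esub> v) \<oplus>\<^bsub>B (Suc n)\<^esub> y' \<otimes>\<^bsub>B (Suc n)\<^esub> v"
      unfolding eq ..
    also have "\<dots> = (y' \<oplus>\<^bsub>B (Suc n)\<^esub> z \<otimes>\<^bsub>B (Suc n)\<^esub> a) \<otimes>\<^bsub>B (Suc n)\<^esub> v"
      using y'(1) z(1) ac vc by algebra
    finally have "x = (y' \<oplus>\<^bsub>B (Suc n)\<^esub> z \<otimes>\<^bsub>B (Suc n)\<^esub> a) \<otimes>\<^bsub>B (Suc n)\<^esub> v" .
    moreover have "y' \<oplus>\<^bsub>B (Suc n)\<^esub> z \<otimes>\<^bsub>B (Suc n)\<^esub> a \<in> carrier (B (Suc n))"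
      using y'(1) z(1) ac by simp
    ultimately show ?case unfolding v_def n_def by auto
  qed
qed

end


lemma pow_gap: assumes p: "(p::nat) \<ge> 2" shows "p ^ k + p ^ i \<le> p ^ (k + Suc i)"
proof -
  have a: "p ^ k \<le> p ^ (k + i)" using p by (simp add: power_increasing)
  have b: "p ^ i \<le> p ^ (k + i)" using p by (simp add: power_increasing)
  have "p ^ (k + Suc i) = p * p ^ (k + i)" by simp
  also have "\<dots> \<ge> 2 * p ^ (k + i)" using p by simp
  finally show ?thesis using a b by linarith
qed

context ptower begin

definition Gs :: "(nat \<Rightarrow> 'a set) \<Rightarrow> nat \<Rightarrow> nat \<Rightarrow> 'a set set" where
  "Gs f i n = {h \<in> carrier (B n). h \<otimes>\<^bsub>B n\<^esub> w n [^]\<^bsub>B n\<^esub> (p ^ i) = f n}"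

definition Hs :: "(nat \<Rightarrow> 'a set) \<Rightarrow> nat \<Rightarrow> nat \<Rightarrow> 'a set set" where
  "Hs f i k = Fc k (Suc i) ` Gs f i (k + Suc i)"

primrec gs :: "(nat \<Rightarrow> 'a set) \<Rightarrow> nat \<Rightarrow> nat \<Rightarrow> 'a set" where
  "gs f i 0 = (SOME h. h \<in> Hs f i 0)"
| "gs f i (Suc k) = (SOME h. h \<in> Hs f i (Suc k) \<and> F k h = gs f i k)"

lemma wc: "w n \<in> carrier (B n)" by (rule S_mem[OF w_S])

lemma F_G: assumes f: "f \<in> carrier S" and h: "h \<in> Gs f i (Suc n)" shows "F n h \<in> Gs f i n"
proof -
  interpret Fh: ring_hom_ring "B (Suc n)" "B n" "F n" by (rule Fh)
  have hc: "h \<in> carrier (B (Suc n))" and he: "h \<otimes>\<^bsub>B (Suc n)\<^esub> w (Suc n) [^]\<^bsub>B (Suc n)\<^esub> (p ^ i) = f (Suc n)"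
    using h unfolding Gs_def by auto
  have "F n h \<otimes>\<^bsub>B n\<^esub> w n [^]\<^bsub>B n\<^esub> (p ^ i) = F n (h \<otimes>\<^bsub>B (Suc n)\<^esub> w (Suc n) [^]\<^bsub>B (Suc n)\<^esub> (p ^ i))"
    using hc wc Fh.hom_nat_pow S_F[OF w_S] by simp
  also have "\<dots> = f n" using he S_F[OF f] by simp
  finally show ?thesis unfolding Gs_def using F_closed[OF hc] by simp
qed

lemma Fc_G: assumes f: "f \<in> carrier S" shows "h \<in> Gs f i (k + j) \<Longrightarrow> Fc k j h \<in> Gs f i k"
proof (induction j arbitrary: h)
  case 0 then show ?case by simp
next
  case (Suc j)
  have "F (k + j) h \<in> Gs f i (k + j)" using F_G[OF f, of h i "k + j"] Suc.prems by simp
  then show ?case using Suc.IH by simp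
qed

lemma G_ne: assumes f: "f \<in> carrier S" and fi: "f i = \<zero>\<^bsub>B i\<^esub>" and n: "i \<le> n"
  shows "Gs f i n \<noteq> {}"
proof -
  obtain j where j: "n = i + j" using n le_Suc_ex by blast
  have "Fc i j (f (i + j)) = \<zero>\<^bsub>B i\<^esub>" using Fc_S[OF f] fi by simp
  then obtain y where y: "y \<in> carrier (B (i + j))" "f (i + j) = y \<otimes>\<^bsub>B (i + j)\<^esub> w (i + j) [^]\<^bsub>B (i + j)\<^esub> (p ^ i)"
    using kerFc[OF S_mem[OF f]] by blast
  then have "y \<in> Gs f i n" unfolding Gs_def j by simp
  then show ?thesis by blast
qed

lemma Key: assumes f: "f \<in> carrier S" and h: "h \<in> Gs f i (k + Suc i)"
  shows "\<exists>h'\<in>Gs f i (Suc (k + Suc i)). Fc k (Suc i) (F (k + Suc i) h') = Fc k (Suc i) h"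
proof -
  define m where "m = Suc i"
  define n where "n = k + m"
  interpret Bs: cring "B (Suc n)" by (rule crB)
  interpret Bn: cring "B n" by (rule crB)
  interpret Bk: cring "B k" by (rule crB)
  interpret Fh: ring_hom_ring "B (Suc n)" "B n" "F n" by (rule Fh)
  interpret Fch: ring_hom_ring "B n" "B k" "Fc k m"
    using ring_hom_ringI2[OF rB rB Fc_hom[of k m]] unfolding n_def .
  have hG: "h \<in> Gs f i n" using h unfolding n_def m_def .
  have hc: "h \<in> carrier (B n)" using hG unfolding Gs_def mem_Collect_eq by (rule conjunct1)
  have he: "h \<otimes>\<^bsub>B n\<^esub> w n [^]\<^bsub>B n\<^esub> (p ^ i) = f n" using hG unfolding Gs_def mem_Collect_eq by (rule conjunct2)
  have "h \<in> F n ` carrier (B (Suc n))" using hc Fsurj[of n] by simp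
  then obtain h'' where h'': "h'' \<in> carrier (B (Suc n))" "F n h'' = h" by (metis imageE)
  define W where "W = w (Suc n) [^]\<^bsub>B (Suc n)\<^esub> (p ^ i)"
  have Wc: "W \<in> carrier (B (Suc n))" unfolding W_def using wc by simp
  have fc: "f (Suc n) \<in> carrier (B (Suc n))" by (rule S_mem[OF f])
  define e where "e = h'' \<otimes>\<^bsub>B (Suc n)\<^esub> W \<ominus>\<^bsub>B (Suc n)\<^esub> f (Suc n)"
  have ec: "e \<in> carrier (B (Suc n))" unfolding e_def using h'' Wc fc by simp
  have "F n e = F n h'' \<otimes>\<^bsub>B n\<^esub> F n W \<ominus>\<^bsub>B n\<^esub> F n (f (Suc n))"
    unfolding e_def a_minus_def using h'' Wc fc by (simp add: F_add F_inv F_mult)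
  also have "F n W = w n [^]\<^bsub>B n\<^esub> (p ^ i)" unfolding W_def using wc Fh.hom_nat_pow S_F[OF w_S] by simp
  also have "F n (f (Suc n)) = f n" by (rule S_F[OF f])
  finally have "F n e = \<zero>\<^bsub>B n\<^esub>" using h''(2) he S_mem[OF f, of n] hc wc by simp
  then obtain z where z: "z \<in> carrier (B (Suc n))" "e = z \<otimes>\<^bsub>B (Suc n)\<^esub> w (Suc n) [^]\<^bsub>B (Suc n)\<^esub> (p ^ n)"
    using kerF_w[OF ec] by blast
  have p2: "p \<ge> 2" using prime_ge_2_nat[OF prime] .
  have gap: "p ^ k + p ^ i \<le> p ^ n" unfolding n_def m_def by (rule pow_gap[OF p2])
  define c where "c = w (Suc n) [^]\<^bsub>B (Suc n)\<^esub> (p ^ n - p ^ i)"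
  have cc: "c \<in> carrier (B (Suc n))" unfolding c_def using wc by simp
  have "w (Suc n) [^]\<^bsub>B (Suc n)\<^esub> (p ^ n) = c \<otimes>\<^bsub>B (Suc n)\<^esub> W"
    unfolding c_def W_def using Bs.nat_pow_mult[OF wc, of "p ^ n - p ^ i" "p ^ i"] gap by simp
  then have ez: "e = z \<otimes>\<^bsub>B (Suc n)\<^esub> (c \<otimes>\<^bsub>B (Suc n)\<^esub> W)" using z(2) by simp
  define h' where "h' = h'' \<ominus>\<^bsub>B (Suc n)\<^esub> z \<otimes>\<^bsub>B (Suc n)\<^esub> c"
  have h'c: "h' \<in> carrier (B (Suc n))" unfolding h'_def using h'' z cc by simp
  have "h' \<otimes>\<^bsub>B (Suc n)\<^esub> W = h'' \<otimes>\<^bsub>B (Suc n)\<^esub> W \<ominus>\<^bsub>B (Suc n)\<^esub> z \<otimes>\<^bsub>B (Suc n)\<^esub> (c \<otimes>\<^bsub>B (Suc n)\<^esub> W)"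
    unfolding h'_def using h'' z cc Wc by algebra
  also have "\<dots> = h'' \<otimes>\<^bsub>B (Suc n)\<^esub> W \<ominus>\<^bsub>B (Suc n)\<^esub> e" unfolding ez ..
  also have "\<dots> = f (Suc n)" unfolding e_def using h'' Wc fc by algebra
  finally have h'G: "h' \<in> Gs f i (Suc n)" unfolding Gs_def W_def using h'c by simp
  have Fh': "F n h' = h \<ominus>\<^bsub>B n\<^esub> F n z \<otimes>\<^bsub>B n\<^esub> w n [^]\<^bsub>B n\<^esub> (p ^ n - p ^ i)"
    unfolding h'_def c_def a_minus_def using h'' z wc Fh.hom_nat_pow S_F[OF w_S]
    by (simp add: F_add F_inv F_mult)
  have FcW: "Fc k m (w n) = w k" using Fc_S[OF w_S, of k m] unfolding n_def .
  have "Fc k m (F n h') = Fc k m h \<ominus>\<^bsub>B k\<^esub> Fc k m (F n z) \<otimes>\<^bsub>B k\<^esub> w k [^]\<^bsub>B k\<^esub> (p ^ n - p ^ i)"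
    unfolding Fh' a_minus_def using hc F_closed[OF z(1)] wc Fch.hom_nat_pow FcW
    by (simp add: Fch.hom_add Fch.hom_a_inv)
  also have "w k [^]\<^bsub>B k\<^esub> (p ^ n - p ^ i) = w k [^]\<^bsub>B k\<^esub> (p ^ k) \<otimes>\<^bsub>B k\<^esub> w k [^]\<^bsub>B k\<^esub> (p ^ n - p ^ i - p ^ k)"
    using Bk.nat_pow_mult[OF wc, of "p ^ k" "p ^ n - p ^ i - p ^ k"] gap by simp
  also have "\<dots> = \<zero>\<^bsub>B k\<^esub>" using wpow wc by simp
  finally have "Fc k m (F n h') = Fc k m h" using Fch.hom_closed[OF hc] Fch.hom_closed[OF F_closed[OF z(1)]] by (simp add: a_minus_def)
  then show ?thesis using h'G unfolding n_def m_def by blast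
qed

lemma H_surj: assumes f: "f \<in> carrier S" and h: "h \<in> Hs f i k"
  shows "\<exists>h'\<in>Hs f i (Suc k). F k h' = h"
proof -
  obtain g where g: "g \<in> Gs f i (k + Suc i)" "h = Fc k (Suc i) g" using h unfolding Hs_def by blast
  obtain g' where g': "g' \<in> Gs f i (Suc (k + Suc i))" "Fc k (Suc i) (F (k + Suc i) g') = h"
    using Key[OF f g(1)] g(2) by blast
  have "Fc (Suc k) (Suc i) g' \<in> Hs f i (Suc k)" unfolding Hs_def using g'(1) by simp
  moreover have "F k (Fc (Suc k) (Suc i) g') = h" using Fc_bottom[of k "Suc i" g'] g'(2) by simp
  ultimately show ?thesis by blast
qed

lemma H_sub: "f \<in> carrier S \<Longrightarrow> Hs f i k \<subseteq> Gs f i k"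
  unfolding Hs_def using Fc_G by blast

lemma gs_prop: assumes f: "f \<in> carrier S" and fi: "f i = \<zero>\<^bsub>B i\<^esub>"
  shows "gs f i k \<in> Hs f i k \<and> F k (gs f i (Suc k)) = gs f i k"
proof (induction k)
  case 0
  have "Gs f i (0 + Suc i) \<noteq> {}" using G_ne[OF f fi] by simp
  then have "\<exists>h. h \<in> Hs f i 0" unfolding Hs_def by blast
  then have g0: "gs f i 0 \<in> Hs f i 0" using someI_ex by simp
  then have "\<exists>h. h \<in> Hs f i (Suc 0) \<and> F 0 h = gs f i 0" using H_surj[OF f] by blast
  then have "(\<lambda>h. h \<in> Hs f i (Suc 0) \<and> F 0 h = gs f i 0) (SOME h. h \<in> Hs f i (Suc 0) \<and> F 0 h = gs f i 0)"
    by (rule someI_ex)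
  then show ?case using g0 by simp
next
  case (Suc k)
  have gk: "gs f i (Suc k) \<in> Hs f i (Suc k)"
  proof -
    have "\<exists>h. h \<in> Hs f i k" using Suc by blast
    have "\<exists>h. h \<in> Hs f i (Suc k) \<and> F k h = gs f i k" using H_surj[OF f] Suc by blast
    then have "(\<lambda>h. h \<in> Hs f i (Suc k) \<and> F k h = gs f i k) (SOME h. h \<in> Hs f i (Suc k) \<and> F k h = gs f i k)"
      by (rule someI_ex)
    then show ?thesis by simp
  qed
  then have "\<exists>h. h \<in> Hs f i (Suc (Suc k)) \<and> F (Suc k) h = gs f i (Suc k)" using H_surj[OF f] by blast
  then have "(\<lambda>h. h \<in> Hs f i (Suc (Suc k)) \<and> F (Suc k) h = gs f i (Suc k)) (SOME h. h \<in> Hs f i (Suc (Suc k)) \<and> F (Suc k) h = gs f i (Suc k))"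
    by (rule someI_ex)
  then show ?case using gk by simp
qed

lemma division: assumes f: "f \<in> carrier S" and fi: "f i = \<zero>\<^bsub>B i\<^esub>"
  shows "\<exists>g\<in>carrier S. f = g \<otimes>\<^bsub>S\<^esub> w [^]\<^bsub>S\<^esub> (p ^ i)"
proof -
  define g where "g = gs f i"
  have G: "g k \<in> Gs f i k" for k using gs_prop[OF f fi, of k] H_sub[OF f] unfolding g_def by blast
  have "g \<in> carrier S" unfolding S_carr
    using G gs_prop[OF f fi] unfolding Gs_def g_def by blast
  moreover have "f = g \<otimes>\<^bsub>S\<^esub> w [^]\<^bsub>S\<^esub> (p ^ i)"
    unfolding S_ops S_pow using G unfolding Gs_def by auto
  ultimately show ?thesis by blast
qed

end


lemma (in cring) PIdl_prod:
  assumes a: "a \<in> carrier R" and b: "b \<in> carrier R"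
  shows "ideal_prod R (PIdl a) (PIdl b) = PIdl (a \<otimes> b)"
proof
  have Ia: "ideal (PIdl a) R" and Ib: "ideal (PIdl b) R" and Iab: "ideal (PIdl (a \<otimes> b)) R"
    using a b by (simp_all add: cgenideal_ideal)
  show "ideal_prod R (PIdl a) (PIdl b) \<subseteq> PIdl (a \<otimes> b)"
  proof
    fix s assume "s \<in> ideal_prod R (PIdl a) (PIdl b)"
    then show "s \<in> PIdl (a \<otimes> b)"
    proof (induction s rule: ideal_prod.induct)
      case (prod i j)
      obtain x where x: "x \<in> carrier R" "i = x \<otimes> a" using prod(1) unfolding cgenideal_def by blast
      obtain y where y: "y \<in> carrier R" "j = y \<otimes> b" using prod(2) unfolding cgenideal_def by blast
      have "i \<otimes> j = (x \<otimes> y) \<otimes> (a \<otimes> b)" using x y a b by (simp add: m_ac)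
      then show ?case unfolding cgenideal_def using x y by blast
    next
      case (sum s1 s2)
      then show ?case using additive_subgroup.a_closed[OF ideal.axioms(1)[OF Iab]] by blast
    qed
  qed
  have "a \<in> PIdl a" "b \<in> PIdl b" using a b by (simp_all add: cgenideal_self)
  then have "a \<otimes> b \<in> ideal_prod R (PIdl a) (PIdl b)" by (rule ideal_prod.prod)
  then show "PIdl (a \<otimes> b) \<subseteq> ideal_prod R (PIdl a) (PIdl b)"
    by (rule cgenideal_minimal[OF ideal_prod_is_ideal[OF Ia Ib]])
qed

lemma (in cring) PIdl_one: "PIdl \<one> = carrier R"
  unfolding cgenideal_def by force

lemma (in cring) PIdl_pow:
  assumes a: "a \<in> carrier R"
  shows "PIdl a [^]\<^bsub>ideals_set R\<^esub> (n::nat) = PIdl (a [^] n)"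
proof (induction n)
  case 0 then show ?case by (simp add: pow_0_gen ideals_set_def PIdl_one)
next
  case (Suc n)
  have "PIdl a [^]\<^bsub>ideals_set R\<^esub> Suc n = ideal_prod R (PIdl (a [^] n)) (PIdl a)"
    using Suc by (simp add: pow_Suc_gen ideals_set_def)
  also have "\<dots> = PIdl (a [^] n \<otimes> a)" using a by (simp add: PIdl_prod)
  finally show ?case by simp
qed

context ptower begin

definition P :: "nat \<Rightarrow> (nat \<Rightarrow> 'a set) set" where
  "P i = {f \<in> carrier S. f i = \<zero>\<^bsub>B i\<^esub>}"

lemma P_eq: "PIdl\<^bsub>S\<^esub> (w [^]\<^bsub>S\<^esub> (p ^ i)) = P i"
proof
  interpret S: cring S by (rule crS)
  show "PIdl\<^bsub>S\<^esub> (w [^]\<^bsub>S\<^esub> (p ^ i)) \<subseteq> P i"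
  proof
    fix f assume "f \<in> PIdl\<^bsub>S\<^esub> (w [^]\<^bsub>S\<^esub> (p ^ i))"
    then obtain x where x: "x \<in> carrier S" "f = x \<otimes>\<^bsub>S\<^esub> w [^]\<^bsub>S\<^esub> (p ^ i)"
      unfolding cgenideal_def by blast
    interpret Bi: cring "B i" by (rule crB)
    have "f \<in> carrier S" using x w_S by simp
    moreover have "f i = \<zero>\<^bsub>B i\<^esub>" using x(2) S_mem[OF x(1), of i] wpow[of i]
      by (simp add: S_ops S_pow)
    ultimately show "f \<in> P i" unfolding P_def by simp
  qed
  show "P i \<subseteq> PIdl\<^bsub>S\<^esub> (w [^]\<^bsub>S\<^esub> (p ^ i))"
  proof
    fix f assume "f \<in> P i"
    then have f: "f \<in> carrier S" "f i = \<zero>\<^bsub>B i\<^esub>" unfolding P_def by auto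
    then show "f \<in> PIdl\<^bsub>S\<^esub> (w [^]\<^bsub>S\<^esub> (p ^ i))"
      using division[OF f] unfolding cgenideal_def by blast
  qed
qed

lemma J_eq: "J = PIdl\<^bsub>S\<^esub> w"
proof -
  interpret S: cring S by (rule crS)
  have "J = P 0" unfolding P_def small_tilt_ideal_def ..
  also have "\<dots> = PIdl\<^bsub>S\<^esub> (w [^]\<^bsub>S\<^esub> (p ^ 0))" by (rule P_eq[symmetric])
  also have "\<dots> = PIdl\<^bsub>S\<^esub> w" using w_S by simp
  finally show ?thesis .
qed

lemma Jpow: "J [^]\<^bsub>ideals_set S\<^esub> (p ^ i) = P i"
  unfolding J_eq using cring.PIdl_pow[OF crS w_S] P_eq by simp

lemma P_ideal: "ideal (P i) S"
proof -
  interpret S: cring S by (rule crS)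
  show ?thesis unfolding P_eq[symmetric] using w_S by (simp add: S.cgenideal_ideal)
qed

end

context ptower begin

lemma Pfrob: assumes j: "j \<in> P i" shows "j [^]\<^bsub>S\<^esub> p \<in> P (Suc i)"
proof -
  interpret S: cring S by (rule crS)
  have jc: "j \<in> carrier S" and j0: "j i = \<zero>\<^bsub>B i\<^esub>" using j unfolding P_def by auto
  have "(j [^]\<^bsub>S\<^esub> p) (Suc i) = T i (j i)" using TF[OF jc, of i] by (simp add: S_pow)
  also have "\<dots> = \<zero>\<^bsub>B (Suc i)\<^esub>" using j0 T_zero by simp
  finally show ?thesis unfolding P_def using jc by simp
qed

lemma Pfrob_rev: assumes z: "z \<in> carrier S" and zp: "z [^]\<^bsub>S\<^esub> p \<in> P (Suc i)" shows "z \<in> P i"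
proof -
  have "T i (z i) = (z [^]\<^bsub>S\<^esub> p) (Suc i)" using TF[OF z, of i] by (simp add: S_pow)
  also have "\<dots> = \<zero>\<^bsub>B (Suc i)\<^esub>" using zp unfolding P_def by simp
  also have "\<dots> = T i \<zero>\<^bsub>B i\<^esub>" using T_zero by simp
  finally have "z i = \<zero>\<^bsub>B i\<^esub>"
    using Tinj[of i] S_mem[OF z, of i] ring.ring_simprules(2)[OF rB] unfolding inj_on_def by blast
  then show ?thesis unfolding P_def using z by simp
qed

lemma fq: assumes x: "x \<in> carrier S"
  shows "frob_quot S p (P (Suc i)) (P i +>\<^bsub>S\<^esub> x) = P (Suc i) +>\<^bsub>S\<^esub> (x [^]\<^bsub>S\<^esub> p)"
proof -
  interpret S: cring S by (rule crS)
  have img: "(\<lambda>y. P (Suc i) +>\<^bsub>S\<^esub> (y [^]\<^bsub>S\<^esub> p)) ` (P i +>\<^bsub>S\<^esub> x) = {P (Suc i) +>\<^bsub>S\<^esub> (x [^]\<^bsub>S\<^esub> p)}"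
  proof (intro equalityI subsetI)
    fix Y assume "Y \<in> (\<lambda>y. P (Suc i) +>\<^bsub>S\<^esub> (y [^]\<^bsub>S\<^esub> p)) ` (P i +>\<^bsub>S\<^esub> x)"
    then obtain y where y: "y \<in> P i +>\<^bsub>S\<^esub> x" "Y = P (Suc i) +>\<^bsub>S\<^esub> (y [^]\<^bsub>S\<^esub> p)" by blast
    obtain j where j: "j \<in> P i" "y = j \<oplus>\<^bsub>S\<^esub> x" using y(1) unfolding mem_arcos by blast
    have jc: "j \<in> carrier S" using j unfolding P_def by auto
    have yp: "y [^]\<^bsub>S\<^esub> p = j [^]\<^bsub>S\<^esub> p \<oplus>\<^bsub>S\<^esub> x [^]\<^bsub>S\<^esub> p" using j(2) freshS[OF jc x] by simp
    have "(j [^]\<^bsub>S\<^esub> p \<oplus>\<^bsub>S\<^esub> x [^]\<^bsub>S\<^esub> p) \<ominus>\<^bsub>S\<^esub> x [^]\<^bsub>S\<^esub> p = j [^]\<^bsub>S\<^esub> p"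
    proof -
      have gen: "\<And>a b. a \<in> carrier S \<Longrightarrow> b \<in> carrier S \<Longrightarrow> (a \<oplus>\<^bsub>S\<^esub> b) \<ominus>\<^bsub>S\<^esub> b = a"
        by algebra
      show ?thesis by (rule gen) (use jc x in simp_all)
    qed
    then have "y [^]\<^bsub>S\<^esub> p \<ominus>\<^bsub>S\<^esub> x [^]\<^bsub>S\<^esub> p \<in> P (Suc i)" using yp Pfrob[OF j(1)] by simp
    then have "P (Suc i) +>\<^bsub>S\<^esub> (y [^]\<^bsub>S\<^esub> p) = P (Suc i) +>\<^bsub>S\<^esub> (x [^]\<^bsub>S\<^esub> p)"
      using S.quotient_eq_iff_same_a_r_cos[OF P_ideal] jc x j(2) by simp
    then show "Y \<in> {P (Suc i) +>\<^bsub>S\<^esub> (x [^]\<^bsub>S\<^esub> p)}" using y(2) by simp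
  next
    fix Y assume "Y \<in> {P (Suc i) +>\<^bsub>S\<^esub> (x [^]\<^bsub>S\<^esub> p)}"
    then have Y: "Y = P (Suc i) +>\<^bsub>S\<^esub> (x [^]\<^bsub>S\<^esub> p)" by simp
    have "\<zero>\<^bsub>S\<^esub> \<in> P i" using additive_subgroup.zero_closed[OF ideal.axioms(1)[OF P_ideal]] .
    then have "x \<in> P i +>\<^bsub>S\<^esub> x" unfolding mem_arcos using x by force
    then show "Y \<in> (\<lambda>y. P (Suc i) +>\<^bsub>S\<^esub> (y [^]\<^bsub>S\<^esub> p)) ` (P i +>\<^bsub>S\<^esub> x)" using Y by blast
  qed
  show ?thesis unfolding frob_quot_def img by simp
qed

lemma main_inj:
  "inj_on (frob_quot S p (J [^]\<^bsub>ideals_set S\<^esub> (p ^ Suc i)))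
      (carrier (S Quot (J [^]\<^bsub>ideals_set S\<^esub> (p ^ i))))"
proof -
  interpret S: cring S by (rule crS)
  show ?thesis
    unfolding Jpow carrier_Quot
  proof (rule inj_onI)
    fix X1 X2 assume "X1 \<in> (\<lambda>x. P i +>\<^bsub>S\<^esub> x) ` carrier S" "X2 \<in> (\<lambda>x. P i +>\<^bsub>S\<^esub> x) ` carrier S"
      and eq: "frob_quot S p (P (Suc i)) X1 = frob_quot S p (P (Suc i)) X2"
    then obtain x y where x: "x \<in> carrier S" "X1 = P i +>\<^bsub>S\<^esub> x" and y: "y \<in> carrier S" "X2 = P i +>\<^bsub>S\<^esub> y"
      by blast
    have "P (Suc i) +>\<^bsub>S\<^esub> (x [^]\<^bsub>S\<^esub> p) = P (Suc i) +>\<^bsub>S\<^esub> (y [^]\<^bsub>S\<^esub> p)"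
      using eq x y fq by simp
    then have "x [^]\<^bsub>S\<^esub> p \<ominus>\<^bsub>S\<^esub> y [^]\<^bsub>S\<^esub> p \<in> P (Suc i)"
      using S.quotient_eq_iff_same_a_r_cos[OF P_ideal] x y by simp
    then have "(x \<ominus>\<^bsub>S\<^esub> y) [^]\<^bsub>S\<^esub> p \<in> P (Suc i)" using freshS_minus[OF x(1) y(1)] by simp
    then have "x \<ominus>\<^bsub>S\<^esub> y \<in> P i" using Pfrob_rev x y by simp
    then show "X1 = X2" using S.quotient_eq_iff_same_a_r_cos[OF P_ideal] x y by simp
  qed
qed

end

theorem lemma2p10:
  fixes p :: nat and R :: "nat \<Rightarrow> 'a ring" and t :: "nat \<Rightarrow> 'a \<Rightarrow> 'a" and I0 :: "'a set"
    and i :: nat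
  assumes "Factorial_Ring.prime p"
    and "preperfectoid_tower p R t I0"
  shows "inj_on
           (frob_quot (small_tilt p R t I0) p
              (small_tilt_ideal p R t I0 [^]\<^bsub>ideals_set (small_tilt p R t I0)\<^esub> (p ^ Suc i)))
           (carrier (small_tilt p R t I0 Quot
              (small_tilt_ideal p R t I0 [^]\<^bsub>ideals_set (small_tilt p R t I0)\<^esub> (p ^ i))))"
proof -
  interpret ptower p R t I0 using assms by (rule ptower.intro)
  show ?thesis by (rule main_inj)
qed


end
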